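(* Let $m\geq 1$. For a $(2m+1)$-historic tree $H$ on $N$ vertices let $w(H)$ be the number of permutations $\pi\in S_N$ which, used as key sequence, produce the history $\Phi^{-1}(H)$, and let $\mathsf e(H)$ be its number of external vertices. Let \[ W(x,u)=\sum_{n\geq0}\ \sum_{H\text{ on } n+m\text{ vertices}} w(H)\,u^{\mathsf e(H)}\frac{x^n}{n!}. \] Then, as formal power series in $x$ with coefficients polynomials in $u$, \[ \frac{\partial^{m+1}}{\partial x^{m+1}}W(x,u)=\frac{(2m+1)!}{(m!)^2}W(x,u)^2,\qquad \frac{\partial^{i}}{\partial x^{i}}W(0,u)=(m+i)!\,u\quad(i=0,1,\dots,m), \] and $W(x,1)=m!\,(1-x)^{-m-1}$.
   Context: A $B$-tree of order $2m+1$ is a rooted plane search tree whose nodes contain pairwise distinct keys in increasing left-to-right order, every non-root node has between $m$ and $2m$ keys, the root between $1$ and $2m$, all leaves have equal depth. Insertion: place the new key in the appropriate leaf; whenever a node has $2m+1$ keys, split it, moving the median key up into the parent and forming two nodes from the $m$ smallest and $m$ largest keys (new one-key root if the root splits). A permutation $\pi\in S_N$ used as key sequence means inserting $\pi(1),\dots,\pi(N)$ successively into the empty tree; it produces the history $(T_1,\dots,T_N)$, $T_i$ being the tree (up to isomorphism of rooted plane trees) after $i$ insertions; leaves are numbered left to right. A $(2m+1)$-historic tree on $N$ vertices is a rooted plane tree with vertices labelled bijectively by $\{1,\dots,N\}$, labels increasing along every root-to-leaf path, where (root at height $0$) vertices at heights $2m+j(m+1)$, $j\geq 0$, called branchings,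 have two ordered child slots (left, right), each possibly occupied, and all other vertices have a single child slot; unoccupied slots are external vertices, ordered left to right. $\Phi$ is the bijection from histories to historic trees: $\Phi(T_1)$ is the one-vertex tree; if $T_{k+1}$ arises from $T_k$ by inserting into the $i$-th leaf of $T_k$ (before splits), then $\Phi(T_1,\dots,T_{k+1})$ is $\Phi(T_1,\dots,T_k)$ with a vertex labelled $k+1$ placed at its $i$-th external vertex. *)

theory Defs
  imports "HOL-Computational_Algebra.Computational_Algebra" "HOL-Combinatorics.Multiset_Permutations"
begin

text \<open>A B-tree node: a leaf with its (sorted) key list, or an inner node with
 key list ks and child list cs (length cs = length ks + 1).  The empty tree is
 represented by the leaf with no keys.\<close>
datatype btree = BLeaf "nat list" | BNode "nat list" "btree list"

datatype ins_result = Fit btree | Up btree nat btree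

lemma size_nth_less: "j < length cs \<Longrightarrow> size (cs ! j) < Suc (size_list size cs)"
  by (metis le_imp_less_Suc nth_mem size_list_estimation' order_refl)

function bins :: "nat \<Rightarrow> nat \<Rightarrow> btree \<Rightarrow> ins_result" where
  "bins m x (BLeaf ks) =
     (let ks' = insort x ks in
      if length ks' \<le> 2*m then Fit (BLeaf ks')
      else Up (BLeaf (take m ks')) (ks' ! m) (BLeaf (drop (m+1) ks')))"
| "bins m x (BNode ks cs) =
     (let j = length (filter (\<lambda>k. k < x) ks) in
      if j < length cs then
        (case bins m x (cs ! j) of
           Fit c \<Rightarrow> Fit (BNode ks (cs[j := c]))
         | Up l k r \<Rightarrow>
             (let ks' = take j ks @ k # drop j ks;
                  cs' = take j cs @ l # r # drop (Suc j) cs in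
              if length ks' \<le> 2*m then Fit (BNode ks' cs')
              else Up (BNode (take m ks') (take (m+1) cs')) (ks' ! m)
                      (BNode (drop (m+1) ks') (drop (m+1) cs'))))
      else Fit (BNode ks cs))"
  by pat_completeness auto
termination
  by (relation "measure (\<lambda>(m, x, t). size t)") (auto simp: size_nth_less)

definition binsert :: "nat \<Rightarrow> nat \<Rightarrow> btree \<Rightarrow> btree" where
  "binsert m x t = (case bins m x t of Fit t' \<Rightarrow> t' | Up l k r \<Rightarrow> BNode [k] [l, r])"

fun nleaves :: "btree \<Rightarrow> nat" where
  "nleaves (BLeaf ks) = 1"
| "nleaves (BNode ks cs) = sum_list (map nleaves cs)"

function leaf_idx :: "nat \<Rightarrow> btree \<Rightarrow> nat" where
  "leaf_idx x (BLeaf ks) = 0"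
| "leaf_idx x (BNode ks cs) =
     (let j = length (filter (\<lambda>k. k < x) ks) in
      if j < length cs then sum_list (map nleaves (take j cs)) + leaf_idx x (cs ! j) else 0)"
  by pat_completeness auto
termination
  by (relation "measure (\<lambda>(x, t). size t)") (auto simp: size_nth_less)

text \<open>A vertex carries its label and its ordered list of child slots; a slot is
 either external (unoccupied) or holds a subtree.\<close>
datatype htree = HNode nat "hslot list" and hslot = Ext | Sub htree

text \<open>Number of child slots of a vertex at height h: 2 for branchings
 (heights 2m + j(m+1)), 1 otherwise.\<close>
definition nslots :: "nat \<Rightarrow> nat \<Rightarrow> nat" where
  "nslots m h = (if 2*m \<le> h \<and> (h - 2*m) mod (m+1) = 0 then 2 else 1)"

fun ext_tree :: "htree \<Rightarrow> nat" and ext_slots :: "hslot list \<Rightarrow> nat" where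
  "ext_tree (HNode a ss) = ext_slots ss"
| "ext_slots [] = 0"
| "ext_slots (Ext # ss) = Suc (ext_slots ss)"
| "ext_slots (Sub t # ss) = ext_tree t + ext_slots ss"

text \<open>hins m h l i t: put a new vertex labelled l at the i-th (0-based)
 external vertex of t, whose root is at height h.  ins_slots works on a
 slot list whose slots are at height h.\<close>
fun hins :: "nat \<Rightarrow> nat \<Rightarrow> nat \<Rightarrow> nat \<Rightarrow> htree \<Rightarrow> htree"
and ins_slots :: "nat \<Rightarrow> nat \<Rightarrow> nat \<Rightarrow> nat \<Rightarrow> hslot list \<Rightarrow> hslot list" where
  "hins m h l i (HNode a ss) = HNode a (ins_slots m (Suc h) l i ss)"
| "ins_slots m h l i [] = []"
| "ins_slots m h l i (Ext # ss) =
     (if i = 0 then Sub (HNode l (replicate (nslots m h) Ext)) # ss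
      else Ext # ins_slots m h l (i - 1) ss)"
| "ins_slots m h l i (Sub t # ss) =
     (if i < ext_tree t then Sub (hins m h l i t) # ss
      else Sub t # ins_slots m h l (i - ext_tree t) ss)"

text \<open>State: current B-tree, current historic tree, number of keys inserted.\<close>
definition phi_step :: "nat \<Rightarrow> btree \<times> htree \<times> nat \<Rightarrow> nat \<Rightarrow> btree \<times> htree \<times> nat" where
  "phi_step m st x = (case st of (bt, H, k) \<Rightarrow>
      (binsert m x bt, hins m 0 (Suc k) (leaf_idx x bt) H, Suc k))"

text \<open>Phi applied to the history produced by the key sequence xs.\<close>
fun phi :: "nat \<Rightarrow> nat list \<Rightarrow> htree" where
  "phi m [] = HNode 0 []"
| "phi m (x # xs) =
     fst (snd (foldl (phi_step m)
        (binsert m x (BLeaf []), HNode 1 (replicate (nslots m 0) Ext), 1) xs))"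

definition hw :: "nat \<Rightarrow> nat \<Rightarrow> htree \<Rightarrow> nat" where
  "hw m N H = card {ps \<in> permutations_of_set {1..N}. phi m ps = H}"

definition Wgf :: "nat \<Rightarrow> rat poly fps" where
  "Wgf m = Abs_fps (\<lambda>n.
     smult (1 / of_nat (fact n))
       (\<Sum>H \<in> phi m ` permutations_of_set {1..n+m}.
          of_nat (hw m (n+m) H) * monom 1 (ext_tree H)))"

end

theory Submission
  imports Defs
begin

fun weave :: "(btree \<Rightarrow> nat list) \<Rightarrow> nat list \<Rightarrow> btree list \<Rightarrow> nat list" where
  "weave f ks [] = []"
| "weave f [] (c # cs) = f c"
| "weave f (k # ks) (c # cs) = f c @ k # weave f ks cs"

lemma weave_cong[fundef_cong]:
  "ks = ks' \<Longrightarrow> cs = cs' \<Longrightarrow> (\<And>c. c \<in> set cs \<Longrightarrow> f c = g c) \<Longrightarrow> weave f ks cs = weave g ks' cs'"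
  by (induction f ks cs arbitrary: ks' cs' rule: weave.induct) auto

fun leaves :: "btree \<Rightarrow> nat list list" where
  "leaves (BLeaf ks) = [ks]"
| "leaves (BNode ks cs) = concat (map leaves cs)"

function seps :: "btree \<Rightarrow> nat list" where
  "seps (BLeaf ks) = []"
| "seps (BNode ks cs) = weave seps ks cs"
  by pat_completeness auto
termination
  by (relation "measure size") (auto, metis le_imp_less_Suc size_list_estimation' order_refl)

function inorder :: "btree \<Rightarrow> nat list" where
  "inorder (BLeaf ks) = ks"
| "inorder (BNode ks cs) = weave inorder ks cs"
  by pat_completeness auto
termination
  by (relation "measure size") (auto, metis le_imp_less_Suc size_list_estimation' order_refl)

fun bwf :: "btree \<Rightarrow> bool" where
  "bwf (BLeaf ks) = True"
| "bwf (BNode ks cs) = (length cs = Suc (length ks) \<and> (\<forall>c\<in>set cs. bwf c))"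

lemma nleaves_len: "nleaves t = length (leaves t)"
  by (induction t) (auto simp: length_concat comp_def intro!: arg_cong[where f=sum_list] map_cong)

lemma weave_append:
  "length ks = length cs \<Longrightarrow> weave f (ks @ ks') (cs @ cs') = weave f ks cs @ weave f ks' cs'"
  by (induction ks cs rule: list_induct2) auto

definition wtail :: "(btree \<Rightarrow> nat list) \<Rightarrow> nat \<Rightarrow> nat list \<Rightarrow> btree list \<Rightarrow> nat list" where
  "wtail f j ks cs = (if j < length ks then ks ! j # weave f (drop (Suc j) ks) (drop (Suc j) cs) else [])"

lemma weave_decomp:
  assumes "length cs = Suc (length ks)" "j < length cs"
  shows "weave f ks cs = weave f (take j ks) (take j cs) @ f (cs ! j) @ wtail f j ks cs"
proof -
  have cs: "cs = take j cs @ cs ! j # drop (Suc j) cs" using assms by (simp add: id_take_nth_drop)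
  have ks: "ks = take j ks @ drop j ks" by simp
  have "weave f ks cs = weave f (take j ks @ drop j ks) (take j cs @ cs ! j # drop (Suc j) cs)"
    using cs ks by metis
  also have "\<dots> = weave f (take j ks) (take j cs) @ weave f (drop j ks) (cs ! j # drop (Suc j) cs)"
    using assms by (intro weave_append) auto
  also have "weave f (drop j ks) (cs ! j # drop (Suc j) cs) = f (cs ! j) @ wtail f j ks cs"
  proof (cases "j < length ks")
    case True
    then have "drop j ks = ks ! j # drop (Suc j) ks" by (simp add: Cons_nth_drop_Suc)
    then show ?thesis using True by (simp add: wtail_def)
  next
    case False
    then have "drop j ks = []" "drop (Suc j) cs = []" using assms by auto
    then show ?thesis using False by (simp add: wtail_def)
  qed
  finally show ?thesis .
qed

lemma weave_split:
  assumes "length cs = Suc (length ks)" "n < length ks"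
  shows "weave f ks cs = weave f (take n ks) (take (Suc n) cs) @ ks ! n # weave f (drop (Suc n) ks) (drop (Suc n) cs)"
proof -
  have d: "weave f ks cs = weave f (take n ks) (take n cs) @ f (cs ! n) @ wtail f n ks cs"
    using assms by (intro weave_decomp) auto
  have "take (Suc n) cs = take n cs @ [cs ! n]" using assms by (simp add: take_Suc_conv_app_nth)
  moreover have "weave f (take n ks @ []) (take n cs @ [cs ! n]) = weave f (take n ks) (take n cs) @ weave f [] [cs ! n]"
    using assms by (intro weave_append) auto
  ultimately have "weave f (take n ks) (take (Suc n) cs) = weave f (take n ks) (take n cs) @ weave f [] [cs ! n]"
    by simp
  then have e: "weave f (take n ks) (take (Suc n) cs) = weave f (take n ks) (take n cs) @ f (cs ! n)"
    by simp
  have "wtail f n ks cs = ks ! n # weave f (drop (Suc n) ks) (drop (Suc n) cs)"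
    using assms(2) by (simp add: wtail_def)
  then show ?thesis using d e by simp
qed

lemma weave_ins:
  assumes "length cs = Suc (length ks)" "j < length cs"
  shows "weave f (take j ks @ k # drop j ks) (take j cs @ l # r # drop (Suc j) cs)
       = weave f (take j ks) (take j cs) @ f l @ k # f r @ wtail f j ks cs"
proof -
  have "weave f (take j ks @ k # drop j ks) (take j cs @ l # r # drop (Suc j) cs)
     = weave f (take j ks) (take j cs) @ weave f (k # drop j ks) (l # r # drop (Suc j) cs)"
    using assms by (intro weave_append) auto
  also have "weave f (drop j ks) (r # drop (Suc j) cs) = f r @ wtail f j ks cs"
  proof (cases "j < length ks")
    case True
    then have "drop j ks = ks ! j # drop (Suc j) ks" by (simp add: Cons_nth_drop_Suc)
    then show ?thesis using True by (simp add: wtail_def)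
  next
    case False
    then have "drop j ks = []" "drop (Suc j) cs = []" using assms by auto
    then show ?thesis using False by (simp add: wtail_def)
  qed
  ultimately show ?thesis by simp
qed

lemma length_weave_eq:
  "length ks = length cs \<Longrightarrow> length (weave f ks cs) = sum_list (map (length \<circ> f) cs) + length ks"
  by (induction ks cs rule: list_induct2) auto

lemma set_weave: "set (weave f ks cs) \<subseteq> set ks \<union> (\<Union>c\<in>set cs. set (f c))"
  by (induction f ks cs rule: weave.induct) auto

lemma set_weave_mono:
  "(\<And>c. c \<in> set cs \<Longrightarrow> set (f c) \<subseteq> set (g c)) \<Longrightarrow> set (weave f ks cs) \<subseteq> set (weave g ks cs)"
  by (induction f ks cs rule: weave.induct) auto

lemma keys_in_weave: "length cs = Suc (length ks) \<Longrightarrow> set ks \<subseteq> set (weave f ks cs)"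
  by (induction f ks cs rule: weave.induct) auto

lemma seps_sub_inorder: "set (seps t) \<subseteq> set (inorder t)"
  by (induction t) (auto intro: set_weave_mono[THEN subsetD])

lemma len_leaves_wf: "bwf t \<Longrightarrow> length (leaves t) = Suc (length (seps t))"
proof (induction t)
  case (BLeaf ks) then show ?case by simp
next
  case (BNode ks cs)
  have h: "\<forall>c\<in>set cs'. length (leaves c) = Suc (length (seps c)) \<Longrightarrow>
      length (concat (map leaves cs')) = sum_list (map (length \<circ> seps) cs') + length cs'" for cs'
    by (induction cs') auto
  obtain c cs0 where cs: "cs = cs0 @ [c]" using BNode.prems
    by (metis length_Suc_conv_rev bwf.simps(2))
  have l: "length cs0 = length ks" using BNode.prems cs by simp
  have "weave seps ks cs = weave seps ks cs0 @ weave seps [] [c]"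
    using weave_append[OF l[symmetric]] cs by (metis append_Nil2)
  have IH: "\<forall>c\<in>set cs. length (leaves c) = Suc (length (seps c))"
    using BNode by auto
  have A: "length (leaves (BNode ks cs)) = sum_list (map (length \<circ> seps) cs) + length cs"
    using h[OF IH] by simp
  have B: "length (seps (BNode ks cs)) = sum_list (map (length \<circ> seps) cs0) + length ks + length (seps c)"
    using `weave seps ks cs = weave seps ks cs0 @ weave seps [] [c]` length_weave_eq[OF l[symmetric], of seps] by simp
  show ?case using A B cs l by simp
qed

lemma len_concat_leaves:
  "\<forall>c\<in>set cs. bwf c \<Longrightarrow> length (concat (map leaves cs)) = sum_list (map (length \<circ> seps) cs) + length cs"
  by (induction cs) (auto simp: len_leaves_wf)

lemma insort_app_left: "(\<forall>p\<in>set P. p < (x::nat)) \<Longrightarrow> insort x (P @ M) = P @ insort x M"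
  by (induction P) auto

lemma insort_app_right: "(\<forall>t\<in>set T. (x::nat) \<le> t) \<Longrightarrow> insort x (M @ T) = insort x M @ T"
  by (induction M) (cases T, auto)

lemma weave_sorted_bounds:
  assumes "sorted (weave f ks cs)" "length cs = Suc (length ks)"
  shows "(\<forall>y\<in>set (weave f (take (length (filter (\<lambda>k. k < x) ks)) ks) (take (length (filter (\<lambda>k. k < x) ks)) cs)). y < x)
       \<and> (\<forall>y\<in>set (wtail f (length (filter (\<lambda>k. k < x) ks)) ks cs). x \<le> y)"
  using assms
proof (induction ks arbitrary: cs)
  case Nil then show ?case by (simp add: wtail_def)
next
  case (Cons k ks)
  obtain c cs' where cs: "cs = c # cs'" using Cons.prems by (cases cs) auto
  have len: "length cs' = Suc (length ks)" using Cons.prems cs by simp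
  have sw: "sorted (f c @ k # weave f ks cs')" using Cons.prems cs by simp
  then have s1: "sorted (weave f ks cs')" and fc: "\<forall>y\<in>set (f c). y \<le> k"
    and kw: "\<forall>y\<in>set (weave f ks cs'). k \<le> y"
    by (auto simp: sorted_append)
  have kks: "\<forall>y\<in>set ks. k \<le> y" using kw keys_in_weave[OF len] by auto
  show ?case
  proof (cases "k < x")
    case True
    have IH: "(\<forall>y\<in>set (weave f (take (length (filter (\<lambda>k. k < x) ks)) ks) (take (length (filter (\<lambda>k. k < x) ks)) cs')). y < x)
       \<and> (\<forall>y\<in>set (wtail f (length (filter (\<lambda>k. k < x) ks)) ks cs'). x \<le> y)"
      using Cons.IH[OF s1 len] .
    define j where "j = length (filter (\<lambda>k. k < x) ks)"
    have fj: "length (filter (\<lambda>k. k < x) (k # ks)) = Suc j" using True by (simp add: j_def)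
    have w1: "weave f (take (Suc j) (k # ks)) (take (Suc j) cs) = f c @ k # weave f (take j ks) (take j cs')"
      using cs by simp
    have w2: "wtail f (Suc j) (k # ks) cs = wtail f j ks cs'"
      using cs by (simp add: wtail_def)
    have IH': "(\<forall>y\<in>set (weave f (take j ks) (take j cs')). y < x) \<and> (\<forall>y\<in>set (wtail f j ks cs'). x \<le> y)"
      using IH unfolding j_def .
    have "\<forall>y\<in>set (f c @ k # weave f (take j ks) (take j cs')). y < x"
    proof
      fix y assume "y \<in> set (f c @ k # weave f (take j ks) (take j cs'))"
      then consider "y \<in> set (f c)" | "y = k" | "y \<in> set (weave f (take j ks) (take j cs'))" by auto
      then show "y < x" using IH' fc True by cases (auto intro: le_less_trans)
    qed
    then show ?thesis unfolding fj w1 w2 using IH' by blast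
  next
    case False
    then have "filter (\<lambda>k. k < x) ks = []" using kks by (auto simp: filter_empty_conv)
    then have fj: "length (filter (\<lambda>k. k < x) (k # ks)) = 0" using False by simp
    have w2: "wtail f 0 (k # ks) cs = k # weave f ks cs'"
      using cs by (simp add: wtail_def)
    show ?thesis unfolding fj w2 using False kw by auto
  qed
qed

definition astep :: "nat \<Rightarrow> nat \<Rightarrow> nat list list \<times> nat list \<Rightarrow> nat list list \<times> nat list" where
  "astep m x st = (case st of (ls, ss) \<Rightarrow>
     let i = length (filter (\<lambda>s. s < x) ss); l = insort x (ls ! i) in
     if length l \<le> 2*m then (ls[i := l], ss)
     else (take i ls @ take m l # drop (Suc m) l # drop (Suc i) ls, take i ss @ l ! m # drop i ss))"

lemma astep_frame:
  assumes "length LA = length P" "\<forall>p\<in>set P. p < x" "\<forall>t\<in>set T. \<not> t < x"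
    "length (filter (\<lambda>s. s < x) Sc) < length Lc"
  shows "astep m x (LA @ Lc @ LB, P @ Sc @ T)
       = (LA @ fst (astep m x (Lc, Sc)) @ LB, P @ snd (astep m x (Lc, Sc)) @ T)"
proof -
  have fP: "filter (\<lambda>s. s < x) P = P" using assms(2) by (simp add: filter_id_conv)
  have fT: "filter (\<lambda>s. s < x) T = []" using assms(3) by (simp add: filter_empty_conv)
  define i where "i = length (filter (\<lambda>s. s < x) Sc)"
  have il: "i < length Lc" using assms(4) by (simp add: i_def)
  have n: "(LA @ Lc @ LB) ! (length P + i) = Lc ! i"
    using assms(1) il by (simp add: nth_append)
  have u: "(LA @ Lc @ LB)[length P + i := y] = LA @ Lc[i := y] @ LB" for y
    using assms(1) il by (simp add: list_update_append)
  have t1: "take (length P + i) (LA @ Lc @ LB) = LA @ take i Lc" using assms(1) il by simp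
  have d1: "drop (Suc (length P + i)) (LA @ Lc @ LB) = drop (Suc i) Lc @ LB" using assms(1) il by simp
  have iS: "i \<le> length Sc" unfolding i_def by simp
  have t2: "take (length P + i) (P @ Sc @ T) = P @ take i Sc" using iS by simp
  have d2: "drop (length P + i) (P @ Sc @ T) = drop i Sc @ T"
  proof -
    have "i \<le> length Sc" unfolding i_def by simp
    then show ?thesis by simp
  qed
  show ?thesis
    unfolding astep_def using assms(1) il iS
    by (simp add: fP fT Let_def i_def[symmetric] n u t1 d1 t2 d2)
qed

fun absR :: "ins_result \<Rightarrow> nat list list \<times> nat list" where
  "absR (Fit t) = (leaves t, seps t)"
| "absR (Up l k r) = (leaves l @ leaves r, seps l @ k # seps r)"

fun inoR :: "ins_result \<Rightarrow> nat list" where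
  "inoR (Fit t) = inorder t"
| "inoR (Up l k r) = inorder l @ k # inorder r"

fun wfR :: "ins_result \<Rightarrow> bool" where
  "wfR (Fit t) = bwf t"
| "wfR (Up l k r) = (bwf l \<and> bwf r)"

lemma set_wtail_mono:
  "(\<And>c. c \<in> set cs \<Longrightarrow> set (f c) \<subseteq> set (g c)) \<Longrightarrow> set (wtail f j ks cs) \<subseteq> set (wtail g j ks cs)"
  unfolding wtail_def using set_weave_mono[of "drop (Suc j) cs" f g "drop (Suc j) ks"]
  by (auto dest: in_set_dropD)

lemma bins_abs:
  "bwf t \<Longrightarrow> sorted (inorder t) \<Longrightarrow>
    absR (bins m x t) = astep m x (leaves t, seps t) \<and> inoR (bins m x t) = insort x (inorder t)
    \<and> wfR (bins m x t)"
proof (induction m x t rule: bins.induct)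
  case (1 m x ks)
  have tnd: "take m l @ l ! m # drop (Suc m) l = l" if "m < length l" for l :: "nat list"
    using id_take_nth_drop[OF that] by simp
  show ?case using tnd[of "insort x ks"] by (simp add: astep_def Let_def)
next
  case (2 m x ks cs)
  define j where "j = length (filter (\<lambda>k. k < x) ks)"
  have len: "length cs = Suc (length ks)" and wfc: "\<forall>c\<in>set cs. bwf c"
    using "2.prems" by auto
  have srt: "sorted (weave inorder ks cs)" using "2.prems" by simp
  have jks: "j \<le> length ks" unfolding j_def by simp
  then have jl: "j < length cs" using len by simp
  define c where "c = cs ! j"
  have cin: "c \<in> set cs" using jl by (simp add: c_def)
  define Pi where "Pi = weave inorder (take j ks) (take j cs)"
  define Ti where "Ti = wtail inorder j ks cs"
  define Ps where "Ps = weave seps (take j ks) (take j cs)"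
  define Ts where "Ts = wtail seps j ks cs"
  define LA where "LA = concat (map leaves (take j cs))"
  define LB where "LB = concat (map leaves (drop (Suc j) cs))"
  have ino: "weave inorder ks cs = Pi @ inorder c @ Ti"
    unfolding Pi_def Ti_def c_def using weave_decomp[OF len jl] .
  have sps: "weave seps ks cs = Ps @ seps c @ Ts"
    unfolding Ps_def Ts_def c_def using weave_decomp[OF len jl] .
  have lvs: "concat (map leaves cs) = LA @ leaves c @ LB"
    unfolding LA_def LB_def c_def using jl
    by (metis (no_types, lifting) append_Cons append_self_conv2 concat_append concat.simps(2) id_take_nth_drop map_append map_eq_Cons_conv)
  have bnd: "(\<forall>y\<in>set Pi. y < x) \<and> (\<forall>y\<in>set Ti. x \<le> y)"
    using weave_sorted_bounds[OF srt len, of x] unfolding Pi_def Ti_def j_def .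
  have sub1: "set Ps \<subseteq> set Pi" unfolding Ps_def Pi_def
    by (rule set_weave_mono) (rule seps_sub_inorder)
  have sub2: "set Ts \<subseteq> set Ti" unfolding Ts_def Ti_def
    by (rule set_wtail_mono) (rule seps_sub_inorder)
  have bndP: "\<forall>p\<in>set Ps. p < x" using bnd sub1 by auto
  have bndT: "\<forall>t\<in>set Ts. \<not> t < x" using bnd sub2 by (auto simp: not_less)
  have wfcc: "bwf c" using wfc cin by auto
  have srtc: "sorted (inorder c)" using srt ino by (simp add: sorted_append)
  have lenLA: "length LA = length Ps"
  proof -
    have "length (take j ks) = length (take j cs)" using jks jl by simp
    then have "length Ps = sum_list (map (length \<circ> seps) (take j cs)) + j"
      unfolding Ps_def using length_weave_eq jks by simp
    moreover have "length LA = sum_list (map (length \<circ> seps) (take j cs)) + j"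
      unfolding LA_def using len_concat_leaves[of "take j cs"] wfc jl
      by (auto dest: in_set_takeD)
    ultimately show ?thesis by simp
  qed
  have cnt: "length (filter (\<lambda>s. s < x) (seps c)) < length (leaves c)"
    using len_leaves_wf[OF wfcc] by (simp add: le_imp_less_Suc)
  have frame: "astep m x (LA @ leaves c @ LB, Ps @ seps c @ Ts)
       = (LA @ fst (astep m x (leaves c, seps c)) @ LB, Ps @ snd (astep m x (leaves c, seps c)) @ Ts)"
    by (rule astep_frame[OF lenLA bndP bndT cnt])
  have IH: "absR (bins m x c) = astep m x (leaves c, seps c) \<and> inoR (bins m x c) = insort x (inorder c)
    \<and> wfR (bins m x c)"
    using "2.IH"[OF j_def jl] wfcc srtc unfolding c_def by blast
  have insx: "insort x (Pi @ inorder c @ Ti) = Pi @ insort x (inorder c) @ Ti"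
    using bnd by (simp add: insort_app_left insort_app_right)
  have st: "(leaves (BNode ks cs), seps (BNode ks cs)) = (LA @ leaves c @ LB, Ps @ seps c @ Ts)"
    using lvs sps by simp
  have bdef: "bins m x (BNode ks cs) = (case bins m x c of
           Fit c' \<Rightarrow> Fit (BNode ks (cs[j := c']))
         | Up l k r \<Rightarrow>
             (let ks' = take j ks @ k # drop j ks;
                  cs' = take j cs @ l # r # drop (Suc j) cs in
              if length ks' \<le> 2*m then Fit (BNode ks' cs')
              else Up (BNode (take m ks') (take (m+1) cs')) (ks' ! m)
                      (BNode (drop (m+1) ks') (drop (m+1) cs'))))"
    using jl unfolding bins.simps(2) Let_def j_def[symmetric] c_def by simp
  show ?case
  proof (cases "bins m x c")
    case (Fit c')
    have upd: "cs[j := c'] = take j cs @ c' # drop (Suc j) cs" using jl by (simp add: upd_conv_take_nth_drop)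
    have len': "length (cs[j := c']) = Suc (length ks)" using len by simp
    have jl': "j < length (cs[j := c'])" using jl by simp
    have tk: "take j (cs[j := c']) = take j cs" by simp
    have dr: "drop (Suc j) (cs[j := c']) = drop (Suc j) cs" using jl upd by simp
    have wt: "wtail f j ks (cs[j := c']) = wtail f j ks cs" for f unfolding wtail_def dr ..
    have d: "weave f ks (cs[j := c']) = weave f (take j ks) (take j cs) @ f c' @ wtail f j ks cs" for f
      using weave_decomp[OF len' jl', of f] tk wt jl by simp
    have lv': "concat (map leaves (cs[j := c'])) = LA @ leaves c' @ LB"
      unfolding upd LA_def LB_def by simp
    have IHF: "(leaves c', seps c') = astep m x (leaves c, seps c)" "inorder c' = insort x (inorder c)" "bwf c'"
      using IH Fit by auto
    have bwf': "bwf (BNode ks (cs[j := c']))" using len wfc IHF(3)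
      by (auto dest: set_update_subset_insert[THEN subsetD])
    show ?thesis using bdef Fit frame st IHF lv' d[of seps] d[of inorder] bwf' insx ino
      by (simp add: Ps_def Ts_def Pi_def Ti_def, metis fst_conv snd_conv)
  next
    case (Up l k r)
    define ks' where "ks' = take j ks @ k # drop j ks"
    define cs' where "cs' = take j cs @ l # r # drop (Suc j) cs"
    have IHU: "(leaves l @ leaves r, seps l @ k # seps r) = astep m x (leaves c, seps c)"
      "inorder l @ k # inorder r = insort x (inorder c)" "bwf l" "bwf r"
      using IH Up by auto
    have lencs': "length cs' = Suc (length ks')" using len jks jl unfolding cs'_def ks'_def by simp
    have wfcs': "\<forall>c\<in>set cs'. bwf c" using wfc IHU unfolding cs'_def
      by (auto dest: in_set_takeD in_set_dropD)
    have sps': "weave seps ks' cs' = Ps @ (seps l @ k # seps r) @ Ts"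
      unfolding ks'_def cs'_def Ps_def Ts_def using weave_ins[OF len jl] by simp
    have ino': "weave inorder ks' cs' = Pi @ (inorder l @ k # inorder r) @ Ti"
      unfolding ks'_def cs'_def Pi_def Ti_def using weave_ins[OF len jl] by simp
    have lv': "concat (map leaves cs') = LA @ (leaves l @ leaves r) @ LB"
      unfolding cs'_def LA_def LB_def by simp
    have A: "(concat (map leaves cs'), weave seps ks' cs') = astep m x (leaves (BNode ks cs), seps (BNode ks cs))"
      using st frame sps' lv' IHU(1) by (metis fst_conv snd_conv)
    have B: "weave inorder ks' cs' = insort x (inorder (BNode ks cs))"
      using ino' IHU(2) insx ino by simp
    show ?thesis
    proof (cases "length ks' \<le> 2*m")
      case True
      then have "bins m x (BNode ks cs) = Fit (BNode ks' cs')"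
        using bdef Up by (simp add: ks'_def cs'_def Let_def)
      then show ?thesis using A B lencs' wfcs' by simp
    next
      case False
      then have bb: "bins m x (BNode ks cs) = Up (BNode (take m ks') (take (m+1) cs')) (ks' ! m)
                      (BNode (drop (m+1) ks') (drop (m+1) cs'))"
        using bdef Up by (simp add: ks'_def cs'_def Let_def)
      have mk: "m < length ks'" using False by simp
      have s1: "weave f ks' cs' = weave f (take m ks') (take (Suc m) cs') @ ks' ! m # weave f (drop (Suc m) ks') (drop (Suc m) cs')" for f
        using weave_split[OF lencs' mk] .
      have s2: "concat (map leaves cs') = concat (map leaves (take (Suc m) cs')) @ concat (map leaves (drop (Suc m) cs'))"
        by (metis append_take_drop_id concat_append map_append)
      have wfs: "bwf (BNode (take m ks') (take (m+1) cs'))" "bwf (BNode (drop (m+1) ks') (drop (m+1) cs'))"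
        using lencs' mk wfcs' by (auto dest: in_set_takeD in_set_dropD)
      show ?thesis using bb A B s1[of seps] s1[of inorder] s2 wfs by simp
    qed
  qed
qed

lemma leaf_idx_abs:
  "bwf t \<Longrightarrow> sorted (inorder t) \<Longrightarrow> leaf_idx x t = length (filter (\<lambda>s. s < x) (seps t))"
proof (induction x t rule: leaf_idx.induct)
  case (1 x ks)
  then show ?case by simp
next
  case (2 x ks cs)
  define j where "j = length (filter (\<lambda>k. k < x) ks)"
  have len: "length cs = Suc (length ks)" and wfc: "\<forall>c\<in>set cs. bwf c"
    using "2.prems" by auto
  have srt: "sorted (weave inorder ks cs)" using "2.prems" by simp
  have jks: "j \<le> length ks" unfolding j_def by simp
  then have jl: "j < length cs" using len by simp
  define c where "c = cs ! j"
  have cin: "c \<in> set cs" using jl by (simp add: c_def)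
  define Pi where "Pi = weave inorder (take j ks) (take j cs)"
  define Ti where "Ti = wtail inorder j ks cs"
  define Ps where "Ps = weave seps (take j ks) (take j cs)"
  define Ts where "Ts = wtail seps j ks cs"
  have ino: "weave inorder ks cs = Pi @ inorder c @ Ti"
    unfolding Pi_def Ti_def c_def using weave_decomp[OF len jl] .
  have sps: "weave seps ks cs = Ps @ seps c @ Ts"
    unfolding Ps_def Ts_def c_def using weave_decomp[OF len jl] .
  have bnd: "(\<forall>y\<in>set Pi. y < x) \<and> (\<forall>y\<in>set Ti. x \<le> y)"
    using weave_sorted_bounds[OF srt len, of x] unfolding Pi_def Ti_def j_def .
  have sub1: "set Ps \<subseteq> set Pi" unfolding Ps_def Pi_def
    by (rule set_weave_mono) (rule seps_sub_inorder)
  have sub2: "set Ts \<subseteq> set Ti" unfolding Ts_def Ti_def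
    by (rule set_wtail_mono) (rule seps_sub_inorder)
  have bndP: "\<forall>p\<in>set Ps. p < x" using bnd sub1 by auto
  have bndT: "\<forall>t\<in>set Ts. \<not> t < x" using bnd sub2 by (auto simp: not_less)
  have wfcc: "bwf c" using wfc cin by auto
  have srtc: "sorted (inorder c)" using srt ino by (simp add: sorted_append)
  have lenLA: "sum_list (map nleaves (take j cs)) = length Ps"
  proof -
    have "length (take j ks) = length (take j cs)" using jks jl by simp
    then have "length Ps = sum_list (map (length \<circ> seps) (take j cs)) + j"
      unfolding Ps_def using length_weave_eq jks by simp
    moreover have "length (concat (map leaves (take j cs))) = sum_list (map (length \<circ> seps) (take j cs)) + j"
      using len_concat_leaves[of "take j cs"] wfc jl
      by (auto dest: in_set_takeD)
    moreover have "sum_list (map nleaves (take j cs)) = length (concat (map leaves (take j cs)))"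
    proof -
      have "nleaves = (\<lambda>t. length (leaves t))" by (rule ext) (simp add: nleaves_len)
      then show ?thesis by (simp add: length_concat comp_def)
    qed
    ultimately show ?thesis by simp
  qed
  have IH: "leaf_idx x c = length (filter (\<lambda>s. s < x) (seps c))"
    using "2.IH"[OF j_def jl] wfcc srtc unfolding c_def by blast
  have "leaf_idx x (BNode ks cs) = sum_list (map nleaves (take j cs)) + leaf_idx x c"
    using jl by (simp add: j_def c_def Let_def)
  then show ?case using lenLA IH sps bndP bndT
    by (simp add: filter_empty_conv)
qed

lemma binsert_abs:
  assumes "bwf t" "sorted (inorder t)"
  shows "(leaves (binsert m x t), seps (binsert m x t)) = astep m x (leaves t, seps t)
    \<and> inorder (binsert m x t) = insort x (inorder t) \<and> bwf (binsert m x t)"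
proof (cases "bins m x t")
  case (Fit t')
  then show ?thesis using bins_abs[OF assms, of m x] by (simp add: binsert_def)
next
  case (Up l k r)
  then show ?thesis using bins_abs[OF assms, of m x] by (simp add: binsert_def)
qed

fun eh :: "nat \<Rightarrow> htree \<Rightarrow> nat list" and ehs :: "nat \<Rightarrow> hslot list \<Rightarrow> nat list" where
  "eh h (HNode a ss) = ehs (Suc h) ss"
| "ehs h [] = []"
| "ehs h (Ext # ss) = h # ehs h ss"
| "ehs h (Sub t # ss) = eh h t @ ehs h ss"

lemma ext_eh: "ext_tree t = length (eh h t)" "ext_slots ss = length (ehs h ss)"
  by (induction t and ss arbitrary: h and h rule: ext_tree_ext_slots.induct) auto

lemma ehs_rep: "ehs h (replicate k Ext) = replicate k h"
  by (induction k) auto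

lemma eh_hins:
  "i < length (eh h t) \<Longrightarrow> eh h (hins m h l i t) = take i (eh h t)
     @ replicate (nslots m (eh h t ! i)) (Suc (eh h t ! i)) @ drop (Suc i) (eh h t)"
  "i < length (ehs h ss) \<Longrightarrow> ehs h (ins_slots m h l i ss) = take i (ehs h ss)
     @ replicate (nslots m (ehs h ss ! i)) (Suc (ehs h ss ! i)) @ drop (Suc i) (ehs h ss)"
proof (induction m h l i t and m h l i ss rule: hins_ins_slots.induct)
  case (1 m h l i a ss)
  then show ?case by simp
next
  case (2 m h l i)
  then show ?case by simp
next
  case (3 m h l i ss)
  then show ?case by (cases i) (auto simp: ehs_rep)
next
  case (4 m h l i t ss)
  show ?case
  proof (cases "i < ext_tree t")
    case True
    then have il: "i < length (eh h t)" by (simp add: ext_eh(1)[of t h])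
    show ?thesis using "4.IH"(1)[OF True il] True il by (simp add: nth_append)
  next
    case False
    then have il: "\<not> i < length (eh h t)" by (simp add: ext_eh(1)[of t h])
    have il2: "i - ext_tree t < length (ehs h ss)" using "4.prems" il by (simp add: ext_eh(1)[of t h])
    show ?thesis using "4.IH"(2)[OF False il2] False il by (simp add: nth_append ext_eh(1)[of t h] Suc_diff_le not_less)
  qed
qed

definition hf :: "nat \<Rightarrow> nat \<Rightarrow> nat" where
  "hf m h = (if h \<le> 2*m then h else m + (h - Suc (2*m)) mod (Suc m))"

lemma hf_le: "hf m h \<le> 2*m"
proof -
  have "(h - Suc (2*m)) mod (Suc m) \<le> m" using less_Suc_eq_le mod_less_divisor zero_less_Suc by blast
  then show ?thesis by (simp add: hf_def)
qed

lemma hf_ns: assumes "m \<ge> 1" shows "nslots m h = (if hf m h = 2*m then 2 else 1)"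
proof (cases "h \<le> 2*m")
  case True
  then show ?thesis using assms by (auto simp: hf_def nslots_def)
next
  case False
  define d where "d = h - Suc (2*m)"
  have h: "h - 2*m = Suc d" using False by (simp add: d_def)
  have ms: "Suc d mod Suc m = (if d mod Suc m = m then 0 else Suc (d mod Suc m))"
    by (simp add: mod_Suc)
  have ns: "nslots m h = (if Suc d mod Suc m = 0 then 2 else 1)"
    using False h by (simp add: nslots_def)
  have hv: "hf m h = m + d mod Suc m" using False by (simp add: hf_def d_def)
  have dl: "d mod Suc m \<le> m" using less_Suc_eq_le mod_less_divisor zero_less_Suc by blast
  show ?thesis
  proof (cases "d mod Suc m = m")
    case True
    then show ?thesis using ns hv ms by simp
  next
    case False
    then have "d mod Suc m < m" using dl by linarith
    then show ?thesis using ns hv ms False by simp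
  qed
qed

lemma hf_suc: assumes "m \<ge> 1" shows "hf m (Suc h) = (if hf m h = 2*m then m else Suc (hf m h))"
proof (cases "h < 2*m")
  case True
  then show ?thesis by (simp add: hf_def)
next
  case False
  show ?thesis
  proof (cases "h = 2*m")
    case True
    then show ?thesis using assms by (simp add: hf_def)
  next
    case False2: False
    then have hh: "\<not> h \<le> 2*m" using False by simp
    define d where "d = h - Suc (2*m)"
    have hs: "Suc h - Suc (2*m) = Suc d" using hh by (simp add: d_def)
    have ms: "Suc d mod Suc m = (if d mod Suc m = m then 0 else Suc (d mod Suc m))"
      by (simp add: mod_Suc)
    have hv: "hf m h = m + d mod Suc m" using hh by (simp add: hf_def d_def)
    have hv2: "hf m (Suc h) = m + Suc d mod Suc m" using hh hs by (simp add: hf_def)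
    have dl: "d mod Suc m \<le> m" using less_Suc_eq_le mod_less_divisor zero_less_Suc by blast
    show ?thesis
    proof (cases "d mod Suc m = m")
      case True
      then show ?thesis using hv hv2 ms by simp
    next
      case False
      then have "d mod Suc m < m" using dl by linarith
      then show ?thesis using hv hv2 ms False by simp
    qed
  qed
qed

definition INV :: "nat \<Rightarrow> btree \<Rightarrow> htree \<Rightarrow> bool" where
  "INV m bt H = (bwf bt \<and> sorted (inorder bt) \<and> map length (leaves bt) = map (hf m) (eh 0 H))"

lemma INV_step:
  assumes m: "m \<ge> 1" and I: "INV m bt H"
  shows "INV m (binsert m x bt) (hins m 0 l (leaf_idx x bt) H)
    \<and> (leaves (binsert m x bt), seps (binsert m x bt)) = astep m x (leaves bt, seps bt)"
proof -
  have bwf: "bwf bt" and srt: "sorted (inorder bt)" and ml: "map length (leaves bt) = map (hf m) (eh 0 H)"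
    using I by (auto simp: INV_def)
  have B: "(leaves (binsert m x bt), seps (binsert m x bt)) = astep m x (leaves bt, seps bt)"
    "inorder (binsert m x bt) = insort x (inorder bt)" "bwf (binsert m x bt)"
    using binsert_abs[OF bwf srt, of m x] by auto
  define i where "i = length (filter (\<lambda>s. s < x) (seps bt))"
  have li: "leaf_idx x bt = i" using leaf_idx_abs[OF bwf srt] by (simp add: i_def)
  define ls where "ls = leaves bt"
  define E where "E = eh 0 H"
  have lenE: "length E = length ls" using ml by (metis E_def length_map ls_def)
  have il: "i < length ls" unfolding i_def ls_def using len_leaves_wf[OF bwf] by (simp add: le_imp_less_Suc)
  have ilE: "i < length E" using il lenE by simp
  have lsi: "length (ls ! i) = hf m (E ! i)" using ml il lenE
    by (metis E_def ls_def nth_map)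
  define l where "l = insort x (ls ! i)"
  have ll: "length l = Suc (hf m (E ! i))" using lsi by (simp add: l_def)
  have EH: "eh 0 (hins m 0 l' i H) = take i E @ replicate (nslots m (E ! i)) (Suc (E ! i)) @ drop (Suc i) E" for l'
    using eh_hins(1)[of i 0 H m l'] ilE by (simp add: E_def)
  have ast: "astep m x (leaves bt, seps bt) = (if length l \<le> 2*m then (ls[i := l], seps bt)
     else (take i ls @ take m l # drop (Suc m) l # drop (Suc i) ls, take i (seps bt) @ l ! m # drop i (seps bt)))"
    by (simp add: astep_def Let_def i_def[symmetric] l_def ls_def)
  have mlsE: "map length ls = map (hf m) E" using ml by (simp add: ls_def E_def)
  have ml2: "map length (leaves (binsert m x bt)) = map (hf m) (eh 0 (hins m 0 l' i H))" for l'
  proof (cases "length l \<le> 2*m")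
    case True
    then have ne: "hf m (E ! i) \<noteq> 2*m" using ll by simp
    have ns: "nslots m (E ! i) = 1" using hf_ns[OF m] ne by simp
    have "leaves (binsert m x bt) = ls[i := l]" using B(1) ast True by simp
    then have "map length (leaves (binsert m x bt)) = (map length ls)[i := Suc (hf m (E ! i))]"
      using ll by (simp add: map_update)
    also have "\<dots> = take i (map length ls) @ Suc (hf m (E ! i)) # drop (Suc i) (map length ls)"
      using il by (simp add: upd_conv_take_nth_drop)
    also have "\<dots> = map (hf m) (take i E @ [Suc (E ! i)] @ drop (Suc i) E)"
      using mlsE hf_suc[OF m, of "E ! i"] ne by (simp add: take_map[symmetric] drop_map[symmetric])
    finally show ?thesis using EH ns by simp
  next
    case False
    then have eq: "hf m (E ! i) = 2*m" using ll hf_le[of m "E ! i"] by simp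
    have ns: "nslots m (E ! i) = 2" using hf_ns[OF m] eq by simp
    have "leaves (binsert m x bt) = take i ls @ take m l # drop (Suc m) l # drop (Suc i) ls"
      using B(1) ast False by simp
    then have "map length (leaves (binsert m x bt)) = take i (map length ls) @ m # m # drop (Suc i) (map length ls)"
      using ll eq by (simp add: take_map drop_map)
    also have "\<dots> = map (hf m) (take i E @ [Suc (E ! i), Suc (E ! i)] @ drop (Suc i) E)"
      using mlsE hf_suc[OF m, of "E ! i"] eq by (simp add: take_map[symmetric] drop_map[symmetric])
    finally show ?thesis using EH ns by (simp add: numeral_2_eq_2)
  qed
  show ?thesis unfolding INV_def li using B ml2 srt by (simp add: sorted_insort)
qed

definition run :: "nat \<Rightarrow> nat list list \<times> nat list \<Rightarrow> nat list \<Rightarrow> nat list list \<times> nat list" where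
  "run m st xs = foldl (\<lambda>st x. astep m x st) st xs"

lemma INV_fold:
  assumes "m \<ge> 1" "INV m bt H"
  shows "INV m (fst (foldl (phi_step m) (bt, H, k) xs)) (fst (snd (foldl (phi_step m) (bt, H, k) xs)))
    \<and> (leaves (fst (foldl (phi_step m) (bt, H, k) xs)), seps (fst (foldl (phi_step m) (bt, H, k) xs)))
       = run m (leaves bt, seps bt) xs"
  using assms(2)
proof (induction xs arbitrary: bt H k)
  case Nil
  then show ?case by (simp add: run_def)
next
  case (Cons x xs)
  have S: "INV m (binsert m x bt) (hins m 0 (Suc k) (leaf_idx x bt) H)
    \<and> (leaves (binsert m x bt), seps (binsert m x bt)) = astep m x (leaves bt, seps bt)"
    using INV_step[OF assms(1) Cons.prems] .
  have "phi_step m (bt, H, k) x = (binsert m x bt, hins m 0 (Suc k) (leaf_idx x bt) H, Suc k)"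
    by (simp add: phi_step_def)
  then show ?case using Cons.IH[of "binsert m x bt" "hins m 0 (Suc k) (leaf_idx x bt) H" "Suc k"] S
    by (simp add: run_def)
qed

definition init :: "nat list list \<times> nat list" where "init = ([[]], [])"

lemma ext_phi:
  assumes "m \<ge> 1" "xs \<noteq> []"
  shows "ext_tree (phi m xs) = length (fst (run m init xs))"
proof -
  obtain y ys where xs: "xs = y # ys" using assms(2) by (cases xs) auto
  have b0: "binsert m y (BLeaf []) = BLeaf [y]" using assms(1) by (simp add: binsert_def)
  have ns: "nslots m 0 = 1" using assms(1) by (simp add: nslots_def)
  have I0: "INV m (BLeaf [y]) (HNode 1 (replicate (nslots m 0) Ext))"
    using ns assms(1) by (simp add: INV_def hf_def)
  have a0: "astep m y init = ([[y]], [])" using assms(1) by (simp add: astep_def init_def)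
  have F: "INV m (fst (foldl (phi_step m) (BLeaf [y], HNode 1 (replicate (nslots m 0) Ext), 1) ys))
               (fst (snd (foldl (phi_step m) (BLeaf [y], HNode 1 (replicate (nslots m 0) Ext), 1) ys)))
    \<and> (leaves (fst (foldl (phi_step m) (BLeaf [y], HNode 1 (replicate (nslots m 0) Ext), 1) ys)),
       seps (fst (foldl (phi_step m) (BLeaf [y], HNode 1 (replicate (nslots m 0) Ext), 1) ys)))
       = run m ([[y]], []) ys"
    using INV_fold[OF assms(1) I0] by simp
  have r: "run m init xs = run m ([[y]], []) ys" using a0 xs by (simp add: run_def)
  show ?thesis using F r b0 xs unfolding INV_def
    by (simp add: ext_eh(1)[where h=0]) (metis length_map fst_conv)
qed

definition G :: "nat \<Rightarrow> nat list list \<times> nat list \<Rightarrow> nat set \<Rightarrow> rat poly" where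
  "G m st A = (\<Sum>ps\<in>permutations_of_set A. monom 1 (length (fst (run m st ps))))"

lemma G_empty: "G m st {} = monom 1 (length (fst st))"
  by (simp add: G_def run_def)

lemma run_Cons: "run m st (x # xs) = run m (astep m x st) xs"
  by (simp add: run_def)

lemma G_rec:
  assumes "finite A" "A \<noteq> {}"
  shows "G m st A = (\<Sum>x\<in>A. G m (astep m x st) (A - {x}))"
proof -
  have "G m st A = (\<Sum>ps\<in>(\<Union>x\<in>A. (#) x ` permutations_of_set (A - {x})). monom 1 (length (fst (run m st ps))))"
    unfolding G_def using permutations_of_set_nonempty[OF assms(2)] by simp
  also have "\<dots> = (\<Sum>x\<in>A. \<Sum>ps\<in>(#) x ` permutations_of_set (A - {x}). monom 1 (length (fst (run m st ps))))"
    by (rule sum.UNION_disjoint) (use assms in auto)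
  also have "\<dots> = (\<Sum>x\<in>A. G m (astep m x st) (A - {x}))"
  proof (rule sum.cong[OF refl])
    fix x assume "x \<in> A"
    have "(\<Sum>ps\<in>(#) x ` permutations_of_set (A - {x}). monom 1 (length (fst (run m st ps))))
        = (\<Sum>ps\<in>permutations_of_set (A - {x}). monom 1 (length (fst (run m st (x # ps)))))"
      by (subst sum.reindex) (auto simp: inj_on_def)
    then show "(\<Sum>ps\<in>(#) x ` permutations_of_set (A - {x}). monom 1 (length (fst (run m st ps)))) = G m (astep m x st) (A - {x})"
      by (simp add: G_def run_Cons)
  qed
  finally show ?thesis .
qed

definition keys :: "nat list list \<times> nat list \<Rightarrow> nat set" where
  "keys st = set (concat (fst st)) \<union> set (snd st)"

definition good :: "nat list list \<times> nat list \<Rightarrow> bool" where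
  "good st = (length (fst st) = Suc (length (snd st)))"

lemma astep_good_keys:
  assumes "good st"
  shows "good (astep m x st) \<and> keys (astep m x st) = insert x (keys st)"
proof -
  obtain ls ss where st: "st = (ls, ss)" by (cases st)
  define i where "i = length (filter (\<lambda>s. s < x) ss)"
  have il: "i < length ls" using assms st unfolding good_def i_def
    by (simp add: le_imp_less_Suc)
  have iS: "i \<le> length ss" unfolding i_def by simp
  define l where "l = insort x (ls ! i)"
  have ls: "ls = take i ls @ ls ! i # drop (Suc i) ls" using il by (simp add: id_take_nth_drop)
  have setl: "set l = insert x (set (ls ! i))" by (simp add: l_def set_insort_key)
  have ast: "astep m x st = (if length l \<le> 2*m then (ls[i := l], ss)
     else (take i ls @ take m l # drop (Suc m) l # drop (Suc i) ls, take i ss @ l ! m # drop i ss))"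
    by (simp add: astep_def st Let_def i_def[symmetric] l_def)
  have kst: "keys st = set (concat (take i ls)) \<union> set (ls ! i) \<union> set (concat (drop (Suc i) ls)) \<union> set ss"
    unfolding keys_def st using ls by (metis (no_types, lifting) Un_assoc concat.simps(2) concat_append fst_conv set_append snd_conv)
  show ?thesis
  proof (cases "length l \<le> 2*m")
    case True
    have u: "ls[i := l] = take i ls @ l # drop (Suc i) ls" using il by (simp add: upd_conv_take_nth_drop)
    show ?thesis using True ast u il kst setl assms st
      by (auto simp: keys_def good_def)
  next
    case False
    then have ml: "m < length l" by simp
    have l: "set l = set (take m l) \<union> {l ! m} \<union> set (drop (Suc m) l)"
      using id_take_nth_drop[OF ml] by (metis Un_insert_right list.simps(15) set_append sup_bot.right_neutral Un_insert_left)
    have s2: "set (take i ss @ l ! m # drop i ss) = insert (l ! m) (set ss)"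
      by (metis append_take_drop_id insert_commute set_append Un_insert_right list.simps(15) Un_insert_left)
    show ?thesis using False ast il kst setl assms st l s2 iS
      by (auto simp: keys_def good_def)
  qed
qed

definition comb :: "nat list list \<times> nat list \<Rightarrow> nat \<Rightarrow> nat list list \<times> nat list \<Rightarrow> nat list list \<times> nat list" where
  "comb stL k stR = (fst stL @ fst stR, snd stL @ k # snd stR)"

lemma astep_combL:
  assumes "good stL" "\<forall>y\<in>keys stR. k < y" "x < k"
  shows "astep m x (comb stL k stR) = comb (astep m x stL) k stR"
proof -
  have "\<forall>t\<in>set (snd stR). k < t" using assms(2) by (simp add: keys_def)
  then have T: "\<forall>t\<in>set (k # snd stR). \<not> t < x" using assms(3) by auto
  have c: "length (filter (\<lambda>s. s < x) (snd stL)) < length (fst stL)"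
    using assms(1) unfolding good_def by (simp add: le_imp_less_Suc)
  have "astep m x ([] @ fst stL @ fst stR, [] @ snd stL @ (k # snd stR))
      = ([] @ fst (astep m x (fst stL, snd stL)) @ fst stR, [] @ snd (astep m x (fst stL, snd stL)) @ (k # snd stR))"
    by (rule astep_frame) (use T c in auto)
  then show ?thesis by (simp add: comb_def)
qed

lemma astep_combR:
  assumes "good stL" "good stR" "\<forall>y\<in>keys stL. y < k" "k < x"
  shows "astep m x (comb stL k stR) = comb stL k (astep m x stR)"
proof -
  have "\<forall>t\<in>set (snd stL). t < k" using assms(3) by (simp add: keys_def)
  then have P: "\<forall>p\<in>set (snd stL @ [k]). p < x" using assms(4) by auto
  have l: "length (fst stL) = length (snd stL @ [k])" using assms(1) by (simp add: good_def)
  have c: "length (filter (\<lambda>s. s < x) (snd stR)) < length (fst stR)"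
    using assms(2) unfolding good_def by (simp add: le_imp_less_Suc)
  have "astep m x (fst stL @ fst stR @ [], (snd stL @ [k]) @ snd stR @ [])
      = (fst stL @ fst (astep m x (fst stR, snd stR)) @ [], (snd stL @ [k]) @ snd (astep m x (fst stR, snd stR)) @ [])"
    by (rule astep_frame[OF l P]) (use c in auto)
  then show ?thesis by (simp add: comb_def)
qed

lemma G_comb:
  assumes "finite AL" "finite AR" "good stL" "good stR"
    "\<forall>y\<in>keys stL \<union> AL. y < k" "\<forall>y\<in>keys stR \<union> AR. k < y"
  shows "G m (comb stL k stR) (AL \<union> AR)
       = of_nat (card AL + card AR choose card AL) * G m stL AL * G m stR AR"
  using assms
proof (induction "card AL + card AR" arbitrary: AL AR stL stR rule: less_induct)
  case less
  show ?case
  proof (cases "AL \<union> AR = {}")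
    case True
    then show ?thesis by (simp add: G_empty comb_def mult_monom)
  next
    case ne: False
    have disj: "AL \<inter> AR = {}" using less.prems(5,6) by (metis UnCI disjoint_iff less_asym)
    have fin: "finite (AL \<union> AR)" using less.prems by simp
    define a where "a = card AL"
    define b where "b = card AR"
    have GG: "G m (comb stL k stR) (AL \<union> AR)
       = (\<Sum>x\<in>AL. G m (astep m x (comb stL k stR)) ((AL \<union> AR) - {x}))
       + (\<Sum>x\<in>AR. G m (astep m x (comb stL k stR)) ((AL \<union> AR) - {x}))"
      using G_rec[OF fin ne] sum.union_disjoint[OF less.prems(1,2) disj] by simp
    have L: "(\<Sum>x\<in>AL. G m (astep m x (comb stL k stR)) ((AL \<union> AR) - {x}))
       = (if AL = {} then 0 else of_nat (a + b - 1 choose (a - 1)) * G m stL AL * G m stR AR)"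
    proof (cases "AL = {}")
      case True then show ?thesis by simp
    next
      case False
      have "(\<Sum>x\<in>AL. G m (astep m x (comb stL k stR)) ((AL \<union> AR) - {x}))
          = (\<Sum>x\<in>AL. of_nat (a + b - 1 choose (a - 1)) * G m (astep m x stL) (AL - {x}) * G m stR AR)"
      proof (rule sum.cong[OF refl])
        fix x assume x: "x \<in> AL"
        have xk: "x < k" using x less.prems(5) by auto
        have xR: "x \<notin> AR" using x disj by auto
        have e1: "astep m x (comb stL k stR) = comb (astep m x stL) k stR"
          using astep_combL[OF less.prems(3)] less.prems(6) xk by auto
        have e2: "(AL \<union> AR) - {x} = (AL - {x}) \<union> AR" using xR by auto
        have gk: "good (astep m x stL) \<and> keys (astep m x stL) = insert x (keys stL)"
          using astep_good_keys[OF less.prems(3)] .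
        have cl: "card (AL - {x}) = a - 1" using x less.prems(1) by (simp add: a_def)
        have lt: "card (AL - {x}) + card AR < card AL + card AR"
        proof -
          have "card (AL - {x}) < card AL" using less.prems(1) x by (rule card_Diff1_less)
          then show ?thesis by simp
        qed
        have "G m (comb (astep m x stL) k stR) ((AL - {x}) \<union> AR)
           = of_nat (card (AL - {x}) + card AR choose card (AL - {x})) * G m (astep m x stL) (AL - {x}) * G m stR AR"
        proof -
          have p1: "finite (AL - {x})" using less.prems(1) by simp
          have p5: "\<forall>y\<in>keys (astep m x stL) \<union> (AL - {x}). y < k"
            unfolding gk[THEN conjunct2] using less.prems(5) xk by blast
          show ?thesis by (rule less.hyps[OF lt p1 less.prems(2) gk[THEN conjunct1] less.prems(4) p5 less.prems(6)])
        qed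
        moreover have "card (AL - {x}) + card AR = a + b - 1"
        proof -
          have "a > 0" using x less.prems(1) card_gt_0_iff unfolding a_def by blast
          then show ?thesis using cl b_def by simp
        qed
        ultimately show "G m (astep m x (comb stL k stR)) ((AL \<union> AR) - {x})
            = of_nat (a + b - 1 choose (a - 1)) * G m (astep m x stL) (AL - {x}) * G m stR AR"
          using e1 e2 cl by simp
      qed
      also have "\<dots> = of_nat (a + b - 1 choose (a - 1)) * (\<Sum>x\<in>AL. G m (astep m x stL) (AL - {x})) * G m stR AR"
        by (simp add: sum_distrib_left sum_distrib_right mult.assoc)
      also have "\<dots> = of_nat (a + b - 1 choose (a - 1)) * G m stL AL * G m stR AR"
        using G_rec[OF less.prems(1) False] by simp
      finally show ?thesis using False by simp
    qed
    have R: "(\<Sum>x\<in>AR. G m (astep m x (comb stL k stR)) ((AL \<union> AR) - {x}))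
       = (if AR = {} then 0 else of_nat (a + b - 1 choose a) * G m stL AL * G m stR AR)"
    proof (cases "AR = {}")
      case True then show ?thesis by simp
    next
      case False
      have "(\<Sum>x\<in>AR. G m (astep m x (comb stL k stR)) ((AL \<union> AR) - {x}))
          = (\<Sum>x\<in>AR. of_nat (a + b - 1 choose a) * G m stL AL * G m (astep m x stR) (AR - {x}))"
      proof (rule sum.cong[OF refl])
        fix x assume x: "x \<in> AR"
        have xk: "k < x" using x less.prems(6) by auto
        have xL: "x \<notin> AL" using x disj by auto
        have e1: "astep m x (comb stL k stR) = comb stL k (astep m x stR)"
          using astep_combR[OF less.prems(3,4)] less.prems(5) xk by auto
        have e2: "(AL \<union> AR) - {x} = AL \<union> (AR - {x})" using xL by auto
        have gk: "good (astep m x stR) \<and> keys (astep m x stR) = insert x (keys stR)"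
          using astep_good_keys[OF less.prems(4)] .
        have cl: "card (AR - {x}) = b - 1" using x less.prems(2) by (simp add: b_def)
        have lt: "card AL + card (AR - {x}) < card AL + card AR"
        proof -
          have "card (AR - {x}) < card AR" using less.prems(2) x by (rule card_Diff1_less)
          then show ?thesis by simp
        qed
        have "G m (comb stL k (astep m x stR)) (AL \<union> (AR - {x}))
           = of_nat (card AL + card (AR - {x}) choose card AL) * G m stL AL * G m (astep m x stR) (AR - {x})"
        proof -
          have p2: "finite (AR - {x})" using less.prems(2) by simp
          have p6: "\<forall>y\<in>keys (astep m x stR) \<union> (AR - {x}). k < y"
            unfolding gk[THEN conjunct2] using less.prems(6) xk by blast
          show ?thesis by (rule less.hyps[OF lt less.prems(1) p2 less.prems(3) gk[THEN conjunct1] less.prems(5) p6])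
        qed
        moreover have "card AL + card (AR - {x}) = a + b - 1"
        proof -
          have "b > 0" using x less.prems(2) card_gt_0_iff unfolding b_def by blast
          then show ?thesis using cl a_def by simp
        qed
        ultimately show "G m (astep m x (comb stL k stR)) ((AL \<union> AR) - {x})
            = of_nat (a + b - 1 choose a) * G m stL AL * G m (astep m x stR) (AR - {x})"
          using e1 e2 cl a_def by simp
      qed
      also have "\<dots> = of_nat (a + b - 1 choose a) * G m stL AL * (\<Sum>x\<in>AR. G m (astep m x stR) (AR - {x}))"
        by (simp add: sum_distrib_left)
      also have "\<dots> = of_nat (a + b - 1 choose a) * G m stL AL * G m stR AR"
        using G_rec[OF less.prems(2) False] by simp
      finally show ?thesis using False by simp
    qed
    have binom: "(if AL = {} then 0 else a + b - 1 choose (a - 1)) + (if AR = {} then 0 else a + b - 1 choose a)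
        = (a + b choose a)"
    proof -
      have fa: "AL = {} \<longleftrightarrow> a = 0" using less.prems(1) by (simp add: a_def)
      have fb: "AR = {} \<longleftrightarrow> b = 0" using less.prems(2) by (simp add: b_def)
      have ab: "a + b > 0" using ne fa fb by auto
      show ?thesis
      proof (cases "a = 0")
        case True then show ?thesis using fa fb ab by simp
      next
        case a0: False
        show ?thesis
        proof (cases "b = 0")
          case True then show ?thesis using fa fb a0 by simp
        next
          case False
          obtain a' where a': "a = Suc a'" using a0 by (cases a) auto
          then show ?thesis using fa fb a0 False by simp
        qed
      qed
    qed
    have "G m (comb stL k stR) (AL \<union> AR)
        = of_nat ((if AL = {} then 0 else a + b - 1 choose (a - 1)) + (if AR = {} then 0 else a + b - 1 choose a))
           * G m stL AL * G m stR AR"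
      unfolding GG L R by (simp add: algebra_simps)
    then show ?thesis using binom by (simp add: a_def b_def)
  qed
qed

definition shift :: "nat \<Rightarrow> nat list list \<times> nat list \<Rightarrow> nat list list \<times> nat list" where
  "shift c st = (map (map (\<lambda>y. y + c)) (fst st), map (\<lambda>y. y + c) (snd st))"

lemma insort_shift: "insort (x + c) (map (\<lambda>y. y + (c::nat)) l) = map (\<lambda>y. y + c) (insort x l)"
  by (induction l) auto

lemma astep_shift:
  assumes "good st"
  shows "astep m (x + c) (shift c st) = shift c (astep m x st)"
proof -
  obtain ls ss where st: "st = (ls, ss)" by (cases st)
  define i where "i = length (filter (\<lambda>s. s < x) ss)"
  have il: "i < length ls" using assms st unfolding good_def i_def
    by (simp add: le_imp_less_Suc)
  have fi: "length (filter (\<lambda>s. s < x + c) (map (\<lambda>y. y + c) ss)) = i"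
    by (simp add: i_def filter_map comp_def)
  define l where "l = insort x (ls ! i)"
  have li: "insort (x + c) (map (map (\<lambda>y. y + c)) ls ! i) = map (\<lambda>y. y + c) l"
    using il by (simp add: l_def insort_shift)
  have ll: "length l = Suc (length (ls ! i))" by (simp add: l_def)
  have lhs: "astep m (x + c) (shift c st) = (if length l \<le> 2*m then ((map (map (\<lambda>y. y + c)) ls)[i := map (\<lambda>y. y + c) l], map (\<lambda>y. y + c) ss)
     else (take i (map (map (\<lambda>y. y + c)) ls) @ take m (map (\<lambda>y. y + c) l) # drop (Suc m) (map (\<lambda>y. y + c) l) # drop (Suc i) (map (map (\<lambda>y. y + c)) ls),
           take i (map (\<lambda>y. y + c) ss) @ (map (\<lambda>y. y + c) l) ! m # drop i (map (\<lambda>y. y + c) ss)))"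
    unfolding astep_def shift_def st fst_conv snd_conv split Let_def fi li by simp
  have rhs: "astep m x st = (if length l \<le> 2*m then (ls[i := l], ss)
     else (take i ls @ take m l # drop (Suc m) l # drop (Suc i) ls, take i ss @ l ! m # drop i ss))"
    unfolding astep_def st split Let_def i_def[symmetric] l_def[symmetric] by simp
  show ?thesis
  proof (cases "length l \<le> 2*m")
    case True
    then show ?thesis unfolding lhs rhs by (simp add: shift_def map_update)
  next
    case False
    then have ml: "m < length l" by simp
    then show ?thesis unfolding lhs rhs using False by (simp add: shift_def take_map drop_map)
  qed
qed

lemma good_shift: "good (shift c st) = good st"
  by (simp add: good_def shift_def)

lemma G_shift:
  assumes "finite A" "good st"
  shows "G m (shift c st) ((\<lambda>x. x + c) ` A) = G m st A"
  using assms
proof (induction A arbitrary: st rule: finite_remove_induct)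
  case empty
  then show ?case by (simp add: G_empty shift_def)
next
  case (remove A)
  have inj: "inj_on (\<lambda>x. x + c) A" by (simp add: inj_on_def)
  have "G m (shift c st) ((\<lambda>x. x + c) ` A)
      = (\<Sum>y\<in>(\<lambda>x. x + c) ` A. G m (astep m y (shift c st)) ((\<lambda>x. x + c) ` A - {y}))"
    using G_rec[of "(\<lambda>x. x + c) ` A"] remove.hyps by simp
  also have "\<dots> = (\<Sum>x\<in>A. G m (astep m (x + c) (shift c st)) ((\<lambda>x. x + c) ` A - {x + c}))"
    by (rule sum.reindex[OF inj, unfolded comp_def])
  also have "\<dots> = (\<Sum>x\<in>A. G m (astep m x st) (A - {x}))"
  proof (rule sum.cong[OF refl])
    fix x assume x: "x \<in> A"
    have im: "(\<lambda>x. x + c) ` A - {x + c} = (\<lambda>x. x + c) ` (A - {x})" by auto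
    have g: "good (astep m x st)" using astep_good_keys[OF remove.prems] by blast
    show "G m (astep m (x + c) (shift c st)) ((\<lambda>x. x + c) ` A - {x + c}) = G m (astep m x st) (A - {x})"
      unfolding astep_shift[OF remove.prems] im using remove.IH[OF x g] .
  qed
  also have "\<dots> = G m st A" using G_rec[OF remove.hyps(1,2)] by simp
  finally show ?case .
qed

definition leafst :: "nat set \<Rightarrow> nat list list \<times> nat list" where
  "leafst K = ([sorted_list_of_set K], [])"

lemma good_leafst: "good (leafst K)" by (simp add: good_def leafst_def)

lemma insort_sls: "finite K \<Longrightarrow> x \<notin> K \<Longrightarrow> insort x (sorted_list_of_set K) = sorted_list_of_set (insert x K)"
  by (simp add: sorted_list_of_set_insert)

lemma astep_leafst:
  assumes "finite K" "x \<notin> K" "card K < 2*m"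
  shows "astep m x (leafst K) = leafst (insert x K)"
proof -
  have l: "insort x (sorted_list_of_set K) = sorted_list_of_set (insert x K)" by (rule insort_sls[OF assms(1,2)])
  have len: "length (sorted_list_of_set (insert x K)) = Suc (card K)" using assms(1,2) by simp
  show ?thesis unfolding astep_def leafst_def Let_def l using len assms(3)
    by (simp add: l del: sorted_list_of_set.sorted_key_list_of_set_insert_remove)
qed

definition splitst :: "nat \<Rightarrow> nat set \<Rightarrow> nat list list \<times> nat list" where
  "splitst m Q = (let q = sorted_list_of_set Q in ([take m q, drop (Suc m) q], [q ! m]))"

lemma astep_split:
  assumes "finite J" "x \<notin> J" "card J = 2*m"
  shows "astep m x (leafst J) = splitst m (insert x J)"
proof -
  have l: "insort x (sorted_list_of_set J) = sorted_list_of_set (insert x J)" by (rule insort_sls[OF assms(1,2)])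
  have len: "length (sorted_list_of_set (insert x J)) = Suc (card J)" using assms(1,2) by simp
  show ?thesis unfolding astep_def leafst_def splitst_def Let_def l using len assms(3)
    by (simp add: l del: sorted_list_of_set.sorted_key_list_of_set_insert_remove)
qed

lemma regroup:
  fixes F :: "nat set \<Rightarrow> 'a::comm_semiring_1"
  assumes A: "finite A"
  shows "(\<Sum>J\<in>{J. J \<subseteq> A \<and> card J = j}. \<Sum>y\<in>A - J. F (insert y J))
       = of_nat (Suc j) * (\<Sum>J\<in>{J. J \<subseteq> A \<and> card J = Suc j}. F J)"
proof -
  define P where "P = (\<lambda>j. {J. J \<subseteq> A \<and> card J = j})"
  have finP: "finite (P i)" for i unfolding P_def
    by (rule finite_subset[of _ "Pow A"]) (use A in auto)
  define S where "S = Sigma (P j) (\<lambda>J. A - J)"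
  have finS: "finite S" unfolding S_def using finP A by auto
  define g where "g = (\<lambda>p::nat set \<times> nat. insert (snd p) (fst p))"
  have gS: "g ` S \<subseteq> P (Suc j)"
  proof
    fix Q assume "Q \<in> g ` S"
    then obtain J y where Jy: "J \<in> P j" "y \<in> A - J" "Q = insert y J" unfolding S_def g_def by auto
    have "finite J" using Jy(1) A unfolding P_def by (auto intro: finite_subset)
    then show "Q \<in> P (Suc j)" using Jy unfolding P_def by auto
  qed
  have "(\<Sum>J\<in>P j. \<Sum>y\<in>A - J. F (insert y J)) = (\<Sum>(J,y)\<in>S. F (insert y J))"
    unfolding S_def by (rule sum.Sigma) (use finP A in auto)
  also have "\<dots> = (\<Sum>p\<in>S. F (g p))" by (simp add: g_def split_beta)
  also have "\<dots> = (\<Sum>Q\<in>P (Suc j). \<Sum>p\<in>{p \<in> S. g p = Q}. F (g p))"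
    by (rule sum.group[symmetric, OF finS finP gS])
  also have "\<dots> = (\<Sum>Q\<in>P (Suc j). of_nat (Suc j) * F Q)"
  proof (rule sum.cong[OF refl])
    fix Q assume Q: "Q \<in> P (Suc j)"
    have finQ: "finite Q" using Q A unfolding P_def by (auto intro: finite_subset)
    have eq: "{p \<in> S. g p = Q} = (\<lambda>y. (Q - {y}, y)) ` Q"
    proof
      show "{p \<in> S. g p = Q} \<subseteq> (\<lambda>y. (Q - {y}, y)) ` Q"
      proof
        fix p assume p: "p \<in> {p \<in> S. g p = Q}"
        obtain J y where pj: "p = (J, y)" by (cases p)
        have "y \<notin> J" "insert y J = Q" using p pj unfolding S_def g_def by auto
        then have "J = Q - {y}" "y \<in> Q" by auto
        then show "p \<in> (\<lambda>y. (Q - {y}, y)) ` Q" using pj by auto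
      qed
      show "(\<lambda>y. (Q - {y}, y)) ` Q \<subseteq> {p \<in> S. g p = Q}"
      proof
        fix p assume "p \<in> (\<lambda>y. (Q - {y}, y)) ` Q"
        then obtain y where y: "y \<in> Q" "p = (Q - {y}, y)" by auto
        have "Q - {y} \<in> P j" using Q y finQ unfolding P_def by auto
        moreover have "y \<in> A - (Q - {y})" using Q y unfolding P_def by auto
        ultimately show "p \<in> {p \<in> S. g p = Q}" using y unfolding S_def g_def by auto
      qed
    qed
    have "card {p \<in> S. g p = Q} = Suc j"
      unfolding eq using Q by (subst card_image) (auto simp: inj_on_def P_def)
    moreover have "(\<Sum>p\<in>{p \<in> S. g p = Q}. F (g p)) = (\<Sum>p\<in>{p \<in> S. g p = Q}. F Q)"
      by (rule sum.cong) auto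
    ultimately show "(\<Sum>p\<in>{p \<in> S. g p = Q}. F (g p)) = of_nat (Suc j) * F Q"
      by simp
  qed
  also have "\<dots> = of_nat (Suc j) * (\<Sum>Q\<in>P (Suc j). F Q)"
    by (simp add: sum_distrib_left)
  finally show ?thesis unfolding P_def .
qed

lemma fill:
  assumes "finite A" "finite K" "K \<inter> A = {}" "card K + j \<le> 2*m" "j \<le> card A"
  shows "G m (leafst K) A = of_nat (fact j) * (\<Sum>J\<in>{J. J \<subseteq> A \<and> card J = j}. G m (leafst (K \<union> J)) (A - J))"
  using assms(4,5)
proof (induction j)
  case 0
  have z: "J = {}" if "J \<subseteq> A" "card J = 0" for J
    using that assms(1) by (meson card_0_eq finite_subset)
  have e: "{J. J \<subseteq> A \<and> card J = 0} = {{}}"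
    using z by auto
  show ?case unfolding e by simp
next
  case (Suc j)
  have IH: "G m (leafst K) A = of_nat (fact j) * (\<Sum>J\<in>{J. J \<subseteq> A \<and> card J = j}. G m (leafst (K \<union> J)) (A - J))"
    using Suc by simp
  have inner: "G m (leafst (K \<union> J)) (A - J) = (\<Sum>y\<in>A - J. G m (leafst (K \<union> insert y J)) (A - insert y J))"
    if J: "J \<in> {J. J \<subseteq> A \<and> card J = j}" for J
  proof -
    have finJ: "finite J" using J assms(1) by (auto intro: finite_subset)
    have cA: "card (A - J) = card A - j" using J finJ by (simp add: card_Diff_subset)
    have cpos: "card (A - J) > 0" using cA Suc.prems(2) by simp
    have ne: "A - J \<noteq> {}"
    proof
      assume h: "A - J = {}"
      from cpos show False unfolding h by simp
    qed
    have cKJ: "card (K \<union> J) = card K + j"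
      using J assms(2,3) finJ by (subst card_Un_disjoint) auto
    have "G m (leafst (K \<union> J)) (A - J) = (\<Sum>y\<in>A - J. G m (astep m y (leafst (K \<union> J))) (A - J - {y}))"
      using G_rec[OF _ ne] assms(1) by simp
    also have "\<dots> = (\<Sum>y\<in>A - J. G m (leafst (K \<union> insert y J)) (A - insert y J))"
    proof (rule sum.cong[OF refl])
      fix y assume y: "y \<in> A - J"
      have "astep m y (leafst (K \<union> J)) = leafst (insert y (K \<union> J))"
        by (rule astep_leafst) (use y assms(2,3) finJ cKJ Suc.prems in auto)
      moreover have "A - J - {y} = A - insert y J" by auto
      ultimately show "G m (astep m y (leafst (K \<union> J))) (A - J - {y}) = G m (leafst (K \<union> insert y J)) (A - insert y J)"
        by simp
    qed
    finally show ?thesis .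
  qed
  have "G m (leafst K) A = of_nat (fact j) * (\<Sum>J\<in>{J. J \<subseteq> A \<and> card J = j}. \<Sum>y\<in>A - J. G m (leafst (K \<union> insert y J)) (A - insert y J))"
    using IH inner by simp
  also have "\<dots> = of_nat (fact j) * (of_nat (Suc j) * (\<Sum>J\<in>{J. J \<subseteq> A \<and> card J = Suc j}. G m (leafst (K \<union> J)) (A - J)))"
    using regroup[OF assms(1), where j=j and F="\<lambda>J. G m (leafst (K \<union> J)) (A - J)"] by simp
  also have "\<dots> = of_nat (fact (Suc j)) * (\<Sum>J\<in>{J. J \<subseteq> A \<and> card J = Suc j}. G m (leafst (K \<union> J)) (A - J))"
    by (simp add: algebra_simps)
  finally show ?case .
qed

lemma init_leafst: "init = leafst {}" by (simp add: init_def leafst_def)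

lemma S_expand:
  assumes "finite A" "Suc (2*m) \<le> card A"
  shows "G m init A = of_nat (fact (Suc (2*m))) * (\<Sum>Q\<in>{Q. Q \<subseteq> A \<and> card Q = Suc (2*m)}. G m (splitst m Q) (A - Q))"
proof -
  have F: "G m (leafst {}) A = of_nat (fact (2*m)) * (\<Sum>J\<in>{J. J \<subseteq> A \<and> card J = 2*m}. G m (leafst ({} \<union> J)) (A - J))"
    by (rule fill) (use assms in auto)
  have inner: "G m (leafst J) (A - J) = (\<Sum>y\<in>A - J. G m (splitst m (insert y J)) (A - insert y J))"
    if J: "J \<in> {J. J \<subseteq> A \<and> card J = 2*m}" for J
  proof -
    have finJ: "finite J" using J assms(1) by (auto intro: finite_subset)
    have cA: "card (A - J) = card A - 2*m" using J finJ by (simp add: card_Diff_subset)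
    have cpos: "card (A - J) > 0" using cA assms(2) by simp
    have ne: "A - J \<noteq> {}"
    proof
      assume h: "A - J = {}"
      from cpos show False unfolding h by simp
    qed
    have "G m (leafst J) (A - J) = (\<Sum>y\<in>A - J. G m (astep m y (leafst J)) (A - J - {y}))"
      using G_rec[OF _ ne] assms(1) by simp
    also have "\<dots> = (\<Sum>y\<in>A - J. G m (splitst m (insert y J)) (A - insert y J))"
    proof (rule sum.cong[OF refl])
      fix y assume y: "y \<in> A - J"
      have "astep m y (leafst J) = splitst m (insert y J)"
        by (rule astep_split) (use y finJ J in auto)
      moreover have "A - J - {y} = A - insert y J" by auto
      ultimately show "G m (astep m y (leafst J)) (A - J - {y}) = G m (splitst m (insert y J)) (A - insert y J)"
        by simp
    qed
    finally show ?thesis .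
  qed
  have "G m init A = of_nat (fact (2*m)) * (\<Sum>J\<in>{J. J \<subseteq> A \<and> card J = 2*m}. \<Sum>y\<in>A - J. G m (splitst m (insert y J)) (A - insert y J))"
    using F inner by (simp add: init_leafst)
  also have "\<dots> = of_nat (fact (2*m)) * (of_nat (Suc (2*m)) * (\<Sum>Q\<in>{Q. Q \<subseteq> A \<and> card Q = Suc (2*m)}. G m (splitst m Q) (A - Q)))"
    using regroup[OF assms(1), where j="2*m" and F="\<lambda>Q. G m (splitst m Q) (A - Q)"] by simp
  also have "\<dots> = of_nat (fact (Suc (2*m))) * (\<Sum>Q\<in>{Q. Q \<subseteq> A \<and> card Q = Suc (2*m)}. G m (splitst m Q) (A - Q))"
    by (simp add: algebra_simps)
  finally show ?thesis .
qed

definition PL :: "nat \<Rightarrow> nat set \<Rightarrow> nat \<Rightarrow> nat set set" where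
  "PL m A k = {L. L \<subseteq> {y\<in>A. y < k} \<and> card L = m}"
definition PR :: "nat \<Rightarrow> nat set \<Rightarrow> nat \<Rightarrow> nat set set" where
  "PR m A k = {R. R \<subseteq> {y\<in>A. k < y} \<and> card R = m}"

lemma sls_set: "sorted xs \<Longrightarrow> distinct xs \<Longrightarrow> sorted_list_of_set (set xs) = (xs :: nat list)"
  by (simp add: sorted_list_of_set_sort_remdups distinct_remdups_id sorted_sort_id)

lemma three_parts:
  assumes "finite A" "k \<in> A" "L \<in> PL m A k" "R \<in> PR m A k"
  shows "{y \<in> L \<union> insert k R. y < k} = L" "{y \<in> L \<union> insert k R. k < y} = R"
    "card (L \<union> insert k R) = Suc (2*m)" "L \<union> insert k R \<subseteq> A"
proof -
  have L: "L \<subseteq> {y\<in>A. y < k}" "card L = m" and R: "R \<subseteq> {y\<in>A. k < y}" "card R = m"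
    using assms(3,4) by (auto simp: PL_def PR_def)
  show "{y \<in> L \<union> insert k R. y < k} = L" "{y \<in> L \<union> insert k R. k < y} = R"
    using L R by auto
  have fL: "finite L" and fR: "finite R" using L R assms(1) by (auto intro: finite_subset)
  have Lk: "\<forall>x\<in>L. x < k" and Rk: "\<forall>x\<in>R. k < x" using L R by auto
  have d: "L \<inter> insert k R = {}" using Lk Rk less_asym less_irrefl by blast
  have "k \<notin> R" using R by auto
  then show "card (L \<union> insert k R) = Suc (2*m)"
    using card_Un_disjoint[OF fL _ d] fR L R by simp
  show "L \<union> insert k R \<subseteq> A" using L R assms(2) by auto
qed

lemma Q_reindex:
  fixes F :: "nat set \<Rightarrow> 'a::comm_monoid_add"
  assumes A: "finite A"
  shows "(\<Sum>Q\<in>{Q. Q \<subseteq> A \<and> card Q = Suc (2*m)}. F Q)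
       = (\<Sum>k\<in>A. \<Sum>p\<in>PL m A k \<times> PR m A k. F (fst p \<union> insert k (snd p)))"
proof -
  define S where "S = Sigma A (\<lambda>k. PL m A k \<times> PR m A k)"
  define phi where "phi = (\<lambda>t::nat \<times> nat set \<times> nat set. fst (snd t) \<union> insert (fst t) (snd (snd t)))"
  have finPL: "finite (PL m A k)" for k unfolding PL_def
    by (rule finite_subset[of _ "Pow A"]) (use A in auto)
  have finPR: "finite (PR m A k)" for k unfolding PR_def
    by (rule finite_subset[of _ "Pow A"]) (use A in auto)
  have bij: "bij_betw phi S {Q. Q \<subseteq> A \<and> card Q = Suc (2*m)}"
  proof (rule bij_betwI')
    fix t t' assume t: "t \<in> S" and t': "t' \<in> S"
    obtain k L R where tt: "t = (k, L, R)" by (cases t) auto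
    obtain k' L' R' where tt': "t' = (k', L', R')" by (cases t') auto
    have k: "k \<in> A" "L \<in> PL m A k" "R \<in> PR m A k" using t tt S_def by auto
    have k': "k' \<in> A" "L' \<in> PL m A k'" "R' \<in> PR m A k'" using t' tt' S_def by auto
    note P = three_parts[OF A k] three_parts[OF A k']
    show "(phi t = phi t') = (t = t')"
    proof
      assume eq: "phi t = phi t'"
      define Q where "Q = L \<union> insert k R"
      have Q': "Q = L' \<union> insert k' R'" using eq tt tt' by (simp add: phi_def Q_def)
      have c1: "{y \<in> Q. y < k} = L" using P(1) Q_def by simp
      have c2: "{y \<in> Q. y < k'} = L'" using P(5) Q' by simp
      have cl: "card {y \<in> Q. y < k} = m" "card {y \<in> Q. y < k'} = m"
        unfolding c1 c2 using k(2) k'(2) by (auto simp: PL_def)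
      have finQ: "finite Q" using P(4) A Q_def by (auto intro: finite_subset)
      have kk: "k = k'"
      proof (rule ccontr)
        assume "k \<noteq> k'"
        then consider "k < k'" | "k' < k" by linarith
        then show False
        proof cases
          case 1
          have "{y \<in> Q. y < k} \<subset> {y \<in> Q. y < k'}" using 1 unfolding Q_def by auto
          then have "card {y \<in> Q. y < k} < card {y \<in> Q. y < k'}"
            by (rule psubset_card_mono[rotated]) (use finQ in auto)
          then show False using cl by simp
        next
          case 2
          have "k' \<in> Q" using Q' by auto
          then have "{y \<in> Q. y < k'} \<subset> {y \<in> Q. y < k}" using 2 by auto
          then have "card {y \<in> Q. y < k'} < card {y \<in> Q. y < k}"
            by (rule psubset_card_mono[rotated]) (use finQ in auto)
          then show False using cl by simp
        qed
      qed
      have "L = L'" using P(1) P(5) Q' kk unfolding Q_def by metis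
      moreover have "R = R'" using P(2) P(6) Q' kk unfolding Q_def by metis
      ultimately show "t = t'" using tt tt' kk by simp
    qed simp
  next
    fix t assume t: "t \<in> S"
    obtain k L R where tt: "t = (k, L, R)" by (cases t) auto
    have k: "k \<in> A" "L \<in> PL m A k" "R \<in> PR m A k" using t tt S_def by auto
    show "phi t \<in> {Q. Q \<subseteq> A \<and> card Q = Suc (2*m)}"
      using three_parts[OF A k] tt by (simp add: phi_def)
  next
    fix Q assume Q: "Q \<in> {Q. Q \<subseteq> A \<and> card Q = Suc (2*m)}"
    have finQ: "finite Q" using Q A by (auto intro: finite_subset)
    define q where "q = sorted_list_of_set Q"
    have lq: "length q = Suc (2*m)" using Q finQ by (simp add: q_def)
    have sq: "sorted_wrt (<) q" by (simp add: q_def)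
    have dq: "distinct q" by (simp add: q_def)
    have setq: "set q = Q" using finQ by (simp add: q_def)
    have ml: "m < length q" using lq by simp
    define k where "k = q ! m"
    have qd: "q = take m q @ k # drop (Suc m) q" using ml by (simp add: k_def id_take_nth_drop)
    have sw: "sorted_wrt (<) (take m q @ k # drop (Suc m) q)" using sq qd by simp
    then have lt: "\<forall>y\<in>set (take m q). y < k" and gt: "\<forall>y\<in>set (drop (Suc m) q). k < y"
      by (auto simp: sorted_wrt_append)
    have dd: "distinct (take m q @ k # drop (Suc m) q)" using dq qd by simp
    have Qeq: "Q = set (take m q) \<union> insert k (set (drop (Suc m) q))"
      using setq qd by (metis Un_insert_right list.simps(15) set_append)
    have cL: "card (set (take m q)) = m" using dd ml by (simp add: distinct_card)
    have cR: "card (set (drop (Suc m) q)) = m"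
    proof -
      have "distinct (drop (Suc m) q)" using dq by simp
      then show ?thesis using lq by (simp add: distinct_card)
    qed
    have kA: "k \<in> A" using Q Qeq by auto
    have inL: "set (take m q) \<in> PL m A k" using lt cL Q Qeq by (auto simp: PL_def)
    have inR: "set (drop (Suc m) q) \<in> PR m A k" using gt cR Q Qeq by (auto simp: PR_def)
    show "\<exists>t\<in>S. Q = phi t"
      by (rule bexI[of _ "(k, set (take m q), set (drop (Suc m) q))"]) (use Qeq kA inL inR in \<open>auto simp: S_def phi_def\<close>)
  qed
  have "(\<Sum>k\<in>A. \<Sum>p\<in>PL m A k \<times> PR m A k. F (fst p \<union> insert k (snd p))) = (\<Sum>(k,p)\<in>S. F (fst p \<union> insert k (snd p)))"
    unfolding S_def by (rule sum.Sigma) (use A finPL finPR in auto)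
  also have "\<dots> = (\<Sum>t\<in>S. F (phi t))" by (simp add: phi_def split_beta)
  also have "\<dots> = (\<Sum>Q\<in>{Q. Q \<subseteq> A \<and> card Q = Suc (2*m)}. F Q)"
    by (rule sum.reindex_bij_betw[OF bij])
  finally show ?thesis by simp
qed

lemma splitst_parts:
  assumes "finite L" "finite R" "\<forall>y\<in>L. y < k" "\<forall>y\<in>R. k < y" "card L = m"
  shows "splitst m (L \<union> insert k R) = comb (leafst L) k (leafst R)"
proof -
  define xs where "xs = sorted_list_of_set L @ k # sorted_list_of_set R"
  have LR: "\<forall>x\<in>L. \<forall>y\<in>R. x \<le> y" using assms(3,4) by (meson less_imp_le less_trans)
  have s: "sorted xs" using assms LR unfolding xs_def
    by (auto simp: sorted_append less_imp_le)
  have dLR: "L \<inter> R = {}" using assms(3,4) less_asym by blast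
  have d: "distinct xs" using assms dLR unfolding xs_def by auto
  have st: "set xs = L \<union> insert k R" using assms unfolding xs_def by auto
  have q: "sorted_list_of_set (L \<union> insert k R) = xs" using sls_set[OF s d] st by simp
  have lL: "length (sorted_list_of_set L) = m" using assms by simp
  show ?thesis unfolding splitst_def Let_def q comb_def leafst_def
    using lL by (simp add: xs_def nth_append)
qed

lemma keys_leafst: "finite L \<Longrightarrow> keys (leafst L) = L"
  by (simp add: keys_def leafst_def)

lemma sum_PL:
  assumes "finite B"
  shows "of_nat (fact m) * (\<Sum>L\<in>{L. L \<subseteq> B \<and> card L = m}. G m (leafst L) (B - L))
       = (if m \<le> card B then G m init B else 0)"
proof (cases "m \<le> card B")
  case True
  have "G m (leafst {}) B = of_nat (fact m) * (\<Sum>J\<in>{J. J \<subseteq> B \<and> card J = m}. G m (leafst ({} \<union> J)) (B - J))"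
    by (rule fill) (use assms True in auto)
  then show ?thesis using True by (simp add: init_leafst)
next
  case False
  have e: "{L. L \<subseteq> B \<and> card L = m} = {}"
    using False assms card_mono by fastforce
  show ?thesis unfolding e using False by simp
qed

lemma S_rec:
  assumes A: "finite A" and c: "Suc (2*m) \<le> card A"
  shows "of_nat (fact m) ^ 2 * G m init A = of_nat (fact (Suc (2*m))) *
    (\<Sum>k\<in>A. if m \<le> card {y\<in>A. y < k} \<and> m \<le> card {y\<in>A. k < y}
       then of_nat ((card {y\<in>A. y < k} - m + (card {y\<in>A. k < y} - m)) choose (card {y\<in>A. y < k} - m))
            * G m init {y\<in>A. y < k} * G m init {y\<in>A. k < y} else 0)"
proof -
  have "G m init A = of_nat (fact (Suc (2*m))) * (\<Sum>Q\<in>{Q. Q \<subseteq> A \<and> card Q = Suc (2*m)}. G m (splitst m Q) (A - Q))"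
    by (rule S_expand[OF A c])
  also have "(\<Sum>Q\<in>{Q. Q \<subseteq> A \<and> card Q = Suc (2*m)}. G m (splitst m Q) (A - Q))
     = (\<Sum>k\<in>A. \<Sum>p\<in>PL m A k \<times> PR m A k. G m (splitst m (fst p \<union> insert k (snd p))) (A - (fst p \<union> insert k (snd p))))"
    by (rule Q_reindex[OF A])
  finally have G1: "G m init A = of_nat (fact (Suc (2*m))) *
      (\<Sum>k\<in>A. \<Sum>p\<in>PL m A k \<times> PR m A k. G m (splitst m (fst p \<union> insert k (snd p))) (A - (fst p \<union> insert k (snd p))))" .
  have inner: "of_nat (fact m) ^ 2 * (\<Sum>p\<in>PL m A k \<times> PR m A k. G m (splitst m (fst p \<union> insert k (snd p))) (A - (fst p \<union> insert k (snd p))))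
     = (if m \<le> card {y\<in>A. y < k} \<and> m \<le> card {y\<in>A. k < y}
       then of_nat ((card {y\<in>A. y < k} - m + (card {y\<in>A. k < y} - m)) choose (card {y\<in>A. y < k} - m))
            * G m init {y\<in>A. y < k} * G m init {y\<in>A. k < y} else 0)"
    if k: "k \<in> A" for k
  proof -
    define AL where "AL = {y\<in>A. y < k}"
    define AR where "AR = {y\<in>A. k < y}"
    define C where "C = (of_nat ((card AL - m + (card AR - m)) choose (card AL - m)) :: rat poly)"
    have fAL: "finite AL" and fAR: "finite AR" using A by (auto simp: AL_def AR_def)
    have trm: "G m (splitst m (L \<union> insert k R)) (A - (L \<union> insert k R))
        = C * G m (leafst L) (AL - L) * G m (leafst R) (AR - R)"
      if L: "L \<in> PL m A k" and R: "R \<in> PR m A k" for L R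
    proof -
      have LA: "L \<subseteq> AL" "card L = m" and RA: "R \<subseteq> AR" "card R = m"
        using L R by (auto simp: PL_def PR_def AL_def AR_def)
      have fL: "finite L" and fR: "finite R" using LA RA fAL fAR by (auto intro: finite_subset)
      have Lk: "\<forall>y\<in>L. y < k" and Rk: "\<forall>y\<in>R. k < y" using LA RA by (auto simp: AL_def AR_def)
      have sp: "splitst m (L \<union> insert k R) = comb (leafst L) k (leafst R)"
        by (rule splitst_parts[OF fL fR Lk Rk LA(2)])
      have diff: "A - (L \<union> insert k R) = (AL - L) \<union> (AR - R)"
        using LA RA k by (auto simp: AL_def AR_def)
      have gc: "G m (comb (leafst L) k (leafst R)) ((AL - L) \<union> (AR - R))
         = of_nat (card (AL - L) + card (AR - R) choose card (AL - L)) * G m (leafst L) (AL - L) * G m (leafst R) (AR - R)"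
        by (rule G_comb) (use fAL fAR good_leafst keys_leafst[OF fL] keys_leafst[OF fR] Lk Rk in \<open>auto simp: AL_def AR_def\<close>)
      have c1: "card (AL - L) = card AL - m" using LA fL by (simp add: card_Diff_subset)
      have c2: "card (AR - R) = card AR - m" using RA fR by (simp add: card_Diff_subset)
      show ?thesis using sp diff gc c1 c2 by (simp add: C_def)
    qed
    have "(\<Sum>p\<in>PL m A k \<times> PR m A k. G m (splitst m (fst p \<union> insert k (snd p))) (A - (fst p \<union> insert k (snd p))))
       = (\<Sum>p\<in>PL m A k \<times> PR m A k. C * G m (leafst (fst p)) (AL - fst p) * G m (leafst (snd p)) (AR - snd p))"
    proof (rule sum.cong[OF refl])
      fix p assume p: "p \<in> PL m A k \<times> PR m A k"
      obtain L R where pLR: "p = (L, R)" by (cases p)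
      have "L \<in> PL m A k" "R \<in> PR m A k" using p pLR by auto
      from trm[OF this] show "G m (splitst m (fst p \<union> insert k (snd p))) (A - (fst p \<union> insert k (snd p)))
          = C * G m (leafst (fst p)) (AL - fst p) * G m (leafst (snd p)) (AR - snd p)"
        using pLR by simp
    qed
    also have "\<dots> = C * ((\<Sum>L\<in>PL m A k. G m (leafst L) (AL - L)) * (\<Sum>R\<in>PR m A k. G m (leafst R) (AR - R)))"
    proof -
      have "(\<Sum>p\<in>PL m A k \<times> PR m A k. C * G m (leafst (fst p)) (AL - fst p) * G m (leafst (snd p)) (AR - snd p))
          = C * (\<Sum>p\<in>PL m A k \<times> PR m A k. G m (leafst (fst p)) (AL - fst p) * G m (leafst (snd p)) (AR - snd p))"
        by (simp add: sum_distrib_left mult.assoc)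
      also have "(\<Sum>p\<in>PL m A k \<times> PR m A k. G m (leafst (fst p)) (AL - fst p) * G m (leafst (snd p)) (AR - snd p))
          = (\<Sum>L\<in>PL m A k. \<Sum>R\<in>PR m A k. G m (leafst L) (AL - L) * G m (leafst R) (AR - R))"
        by (simp add: sum.cartesian_product split_beta)
      also have "\<dots> = (\<Sum>L\<in>PL m A k. G m (leafst L) (AL - L)) * (\<Sum>R\<in>PR m A k. G m (leafst R) (AR - R))"
        by (simp add: sum_product)
      finally show ?thesis .
    qed
    finally have e: "(\<Sum>p\<in>PL m A k \<times> PR m A k. G m (splitst m (fst p \<union> insert k (snd p))) (A - (fst p \<union> insert k (snd p))))
      = C * ((\<Sum>L\<in>PL m A k. G m (leafst L) (AL - L)) * (\<Sum>R\<in>PR m A k. G m (leafst R) (AR - R)))" .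
    have pl: "PL m A k = {L. L \<subseteq> AL \<and> card L = m}" by (simp add: PL_def AL_def)
    have pr: "PR m A k = {R. R \<subseteq> AR \<and> card R = m}" by (simp add: PR_def AR_def)
    have sL: "of_nat (fact m) * (\<Sum>L\<in>PL m A k. G m (leafst L) (AL - L)) = (if m \<le> card AL then G m init AL else 0)"
      unfolding pl by (rule sum_PL[OF fAL])
    have sR: "of_nat (fact m) * (\<Sum>R\<in>PR m A k. G m (leafst R) (AR - R)) = (if m \<le> card AR then G m init AR else 0)"
      unfolding pr by (rule sum_PL[OF fAR])
    have "of_nat (fact m) ^ 2 * (C * ((\<Sum>L\<in>PL m A k. G m (leafst L) (AL - L)) * (\<Sum>R\<in>PR m A k. G m (leafst R) (AR - R))))
       = C * ((of_nat (fact m) * (\<Sum>L\<in>PL m A k. G m (leafst L) (AL - L))) * (of_nat (fact m) * (\<Sum>R\<in>PR m A k. G m (leafst R) (AR - R))))"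
      by (simp add: power2_eq_square algebra_simps)
    also have "\<dots> = C * ((if m \<le> card AL then G m init AL else 0) * (if m \<le> card AR then G m init AR else 0))"
      unfolding sL sR ..
    finally have F: "of_nat (fact m) ^ 2 * (C * ((\<Sum>L\<in>PL m A k. G m (leafst L) (AL - L)) * (\<Sum>R\<in>PR m A k. G m (leafst R) (AR - R))))
      = C * ((if m \<le> card AL then G m init AL else 0) * (if m \<le> card AR then G m init AR else 0))" .
    show ?thesis unfolding e F AL_def[symmetric] AR_def[symmetric] C_def[symmetric] by auto
  qed
  have "of_nat (fact m) ^ 2 * G m init A = of_nat (fact (Suc (2*m))) *
      (\<Sum>k\<in>A. of_nat (fact m) ^ 2 * (\<Sum>p\<in>PL m A k \<times> PR m A k. G m (splitst m (fst p \<union> insert k (snd p))) (A - (fst p \<union> insert k (snd p)))))"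
    unfolding G1 by (simp add: sum_distrib_left algebra_simps)
  also have "\<dots> = of_nat (fact (Suc (2*m))) *
    (\<Sum>k\<in>A. if m \<le> card {y\<in>A. y < k} \<and> m \<le> card {y\<in>A. k < y}
       then of_nat ((card {y\<in>A. y < k} - m + (card {y\<in>A. k < y} - m)) choose (card {y\<in>A. y < k} - m))
            * G m init {y\<in>A. y < k} * G m init {y\<in>A. k < y} else 0)"
    by (rule arg_cong[where f="\<lambda>x. _ * x"], rule sum.cong[OF refl], rule inner)
  finally show ?thesis .
qed

definition S :: "nat \<Rightarrow> nat \<Rightarrow> rat poly" where "S m N = G m init {1..N}"

lemma good_init: "good init" by (simp add: good_def init_def)

lemma shift_init: "shift c init = init" by (simp add: shift_def init_def)

lemma S_right: "G m init {k<..N} = S m (N - k)"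
proof -
  have "(\<lambda>x. x + k) ` {1..N - k} = {k<..N}"
  proof
    show "(\<lambda>x. x + k) ` {1..N - k} \<subseteq> {k<..N}" by auto
    show "{k<..N} \<subseteq> (\<lambda>x. x + k) ` {1..N - k}"
    proof
      fix y assume "y \<in> {k<..N}"
      then have "y - k \<in> {1..N - k}" "y = (y - k) + k" by auto
      then show "y \<in> (\<lambda>x. x + k) ` {1..N - k}" by blast
    qed
  qed
  then show ?thesis using G_shift[of "{1..N - k}" init m k] good_init shift_init by (simp add: S_def)
qed

lemma S_identity:
  "of_nat (fact m) ^ 2 * S m (n + Suc (2*m)) =
     of_nat (fact (Suc (2*m))) * (\<Sum>i\<le>n. of_nat (n choose i) * S m (i + m) * S m (n - i + m))"
proof -
  define N where "N = n + Suc (2*m)"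
  have cN: "Suc (2*m) \<le> card {1..N}" by (simp add: N_def)
  define T where "T = (\<lambda>k. if m \<le> card {y\<in>{1..N}. y < k} \<and> m \<le> card {y\<in>{1..N}. k < y}
       then of_nat ((card {y\<in>{1..N}. y < k} - m + (card {y\<in>{1..N}. k < y} - m)) choose (card {y\<in>{1..N}. y < k} - m))
            * G m init {y\<in>{1..N}. y < k} * G m init {y\<in>{1..N}. k < y} else (0::rat poly))"
  have R: "of_nat (fact m) ^ 2 * S m N = of_nat (fact (Suc (2*m))) * (\<Sum>k\<in>{1..N}. T k)"
    unfolding S_def T_def by (rule S_rec[OF _ cN]) simp
  have L1: "{y\<in>{1..N}. y < k} = {1..k - 1}" if "k \<in> {1..N}" for k using that by auto
  have R1: "{y\<in>{1..N}. k < y} = {k<..N}" if "k \<in> {1..N}" for k using that by auto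
  have Tk: "T k = (if m \<le> k - 1 \<and> m \<le> N - k then of_nat ((k - 1 - m + (N - k - m)) choose (k - 1 - m))
        * S m (k - 1) * S m (N - k) else 0)" if "k \<in> {1..N}" for k
    unfolding T_def L1[OF that] R1[OF that] S_right by (simp add: S_def)
  have sub: "(\<lambda>i. i + Suc m) ` {..n} \<subseteq> {1..N}" by (auto simp: N_def)
  have "(\<Sum>k\<in>{1..N}. T k) = (\<Sum>k\<in>(\<lambda>i. i + Suc m) ` {..n}. T k)"
  proof (rule sum.mono_neutral_right)
    show "finite {1..N}" by simp
    show "(\<lambda>i. i + Suc m) ` {..n} \<subseteq> {1..N}" by (rule sub)
    show "\<forall>k\<in>{1..N} - (\<lambda>i. i + Suc m) ` {..n}. T k = 0"
    proof
      fix k assume k: "k \<in> {1..N} - (\<lambda>i. i + Suc m) ` {..n}"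
      have "\<not> (m \<le> k - 1 \<and> m \<le> N - k)"
      proof
        assume h: "m \<le> k - 1 \<and> m \<le> N - k"
        then have "k - Suc m \<le> n" "k = (k - Suc m) + Suc m" using k by (auto simp: N_def)
        then have "k \<in> (\<lambda>i. i + Suc m) ` {..n}" by blast
        then show False using k by blast
      qed
      moreover have "k \<in> {1..N}" using k by blast
      ultimately show "T k = 0" using Tk by presburger
    qed
  qed
  also have "\<dots> = (\<Sum>i\<le>n. T (i + Suc m))"
    by (subst sum.reindex) (auto simp: inj_on_def)
  also have "\<dots> = (\<Sum>i\<le>n. of_nat (n choose i) * S m (i + m) * S m (n - i + m))"
  proof (rule sum.cong[OF refl])
    fix i assume i: "i \<in> {..n}"
    have k: "i + Suc m \<in> {1..N}" using i by (auto simp: N_def)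
    have c: "m \<le> i + Suc m - 1 \<and> m \<le> N - (i + Suc m)" using i by (auto simp: N_def)
    have "T (i + Suc m) = (if m \<le> i + Suc m - 1 \<and> m \<le> N - (i + Suc m) then of_nat ((i + Suc m - 1 - m + (N - (i + Suc m) - m)) choose (i + Suc m - 1 - m))
        * S m (i + Suc m - 1) * S m (N - (i + Suc m)) else 0)" by (rule Tk[OF k])
    also have "\<dots> = of_nat ((i + Suc m - 1 - m + (N - (i + Suc m) - m)) choose (i + Suc m - 1 - m))
        * S m (i + Suc m - 1) * S m (N - (i + Suc m))" by (rule if_P[OF c])
    finally have TT: "T (i + Suc m) = of_nat ((i + Suc m - 1 - m + (N - (i + Suc m) - m)) choose (i + Suc m - 1 - m))
        * S m (i + Suc m - 1) * S m (N - (i + Suc m))" .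
    have "i + Suc m - 1 - m + (N - (i + Suc m) - m) = n" "i + Suc m - 1 - m = i" "i + Suc m - 1 = i + m"
      "N - (i + Suc m) = n - i + m" using i by (auto simp: N_def)
    with TT show "T (i + Suc m) = of_nat (n choose i) * S m (i + m) * S m (n - i + m)" by simp
  qed
  finally show ?thesis using R by (simp add: N_def)
qed

lemma Wgf_nth:
  assumes m: "m \<ge> 1"
  shows "Wgf m $ n = smult (1 / of_nat (fact n)) (S m (n + m))"
proof -
  define P where "P = permutations_of_set {1..n+m}"
  have finP: "finite P" by (simp add: P_def)
  have "(\<Sum>H\<in>phi m ` P. of_nat (hw m (n+m) H) * monom 1 (ext_tree H) :: rat poly)
      = (\<Sum>H\<in>phi m ` P. \<Sum>ps\<in>{ps\<in>P. phi m ps = H}. monom 1 (ext_tree (phi m ps)))"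
  proof (rule sum.cong[OF refl])
    fix H assume "H \<in> phi m ` P"
    have "(\<Sum>ps\<in>{ps\<in>P. phi m ps = H}. monom 1 (ext_tree (phi m ps)) :: rat poly)
        = (\<Sum>ps\<in>{ps\<in>P. phi m ps = H}. monom 1 (ext_tree H))" by (rule sum.cong) auto
    also have "\<dots> = of_nat (card {ps\<in>P. phi m ps = H}) * monom 1 (ext_tree H)"
      by (simp add: of_nat_poly)
    finally show "of_nat (hw m (n+m) H) * monom 1 (ext_tree H) = (\<Sum>ps\<in>{ps\<in>P. phi m ps = H}. monom 1 (ext_tree (phi m ps)) :: rat poly)"
      by (simp add: hw_def P_def)
  qed
  also have "\<dots> = (\<Sum>ps\<in>P. monom 1 (ext_tree (phi m ps)))"
    by (rule sum.image_gen[symmetric, OF finP])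
  also have "\<dots> = (\<Sum>ps\<in>P. monom 1 (length (fst (run m init ps))))"
  proof (rule sum.cong[OF refl])
    fix ps assume "ps \<in> P"
    then have "length ps = n + m" by (simp add: P_def length_finite_permutations_of_set)
    then have "ps \<noteq> []" using m by auto
    then show "monom 1 (ext_tree (phi m ps)) = (monom 1 (length (fst (run m init ps))) :: rat poly)"
      using ext_phi[OF m] by simp
  qed
  also have "\<dots> = S m (n + m)" by (simp add: S_def G_def P_def)
  finally show ?thesis by (simp add: Wgf_def P_def)
qed

lemma deriv_pow_nth:
  fixes f :: "rat poly fps"
  shows "of_nat (fact n) * ((fps_deriv ^^ k) f $ n) = of_nat (fact (n + k)) * f $ (n + k)"
proof (induction k arbitrary: f n)
  case 0
  then show ?case by simp
next
  case (Suc k)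
  have "(fps_deriv ^^ Suc k) f = (fps_deriv ^^ k) (fps_deriv f)" by (simp only: funpow_Suc_right comp_def)
  then have "of_nat (fact n) * ((fps_deriv ^^ Suc k) f $ n) = of_nat (fact (n + k)) * (fps_deriv f $ (n + k))"
    using Suc.IH[of n "fps_deriv f"] by simp
  also have "\<dots> = of_nat (fact (n + k)) * (of_nat (n + k + 1) * f $ (n + k + 1))" by simp
  also have "\<dots> = of_nat (fact (n + Suc k)) * f $ (n + Suc k)"
    by (simp add: algebra_simps)
  finally show ?case .
qed

lemma S_small:
  assumes "N \<le> 2*m"
  shows "S m N = smult (of_nat (fact N)) [:0, 1:]"
proof -
  have F: "G m (leafst {}) {1..N} = of_nat (fact N) * (\<Sum>J\<in>{J. J \<subseteq> {1..N} \<and> card J = N}. G m (leafst ({} \<union> J)) ({1..N} - J))"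
    by (rule fill) (use assms in auto)
  have e: "{J. J \<subseteq> {1..N} \<and> card J = N} = {{1..N}}"
  proof
    show "{J. J \<subseteq> {1..N} \<and> card J = N} \<subseteq> {{1..N}}"
    proof
      fix J assume "J \<in> {J. J \<subseteq> {1..N} \<and> card J = N}"
      then have "J \<subseteq> {1..N}" "card J = card {1..N}" by auto
      then have "J = {1..N}" by (metis card_subset_eq finite_atLeastAtMost)
      then show "J \<in> {{1..N}}" by simp
    qed
  qed simp
  have "G m (leafst {1..N}) {} = monom 1 1" by (simp add: G_empty leafst_def)
  then show ?thesis using F unfolding e by (simp add: S_def init_leafst monom_altdef of_nat_poly)
qed

lemma poly_G1: "finite A \<Longrightarrow> poly (G m st A) 1 = of_nat (fact (card A))"
  by (simp add: G_def poly_sum poly_monom)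

lemma inv_pow:
  "inverse ((1 - fps_X) ^ Suc k :: rat fps) = Abs_fps (\<lambda>n. of_nat ((k + n) choose n))"
proof (induction k)
  case 0
  show ?case by (simp add: fps_inverse_one_minus_fps_X)
next
  case (Suc k)
  have "inverse ((1 - fps_X) ^ Suc (Suc k) :: rat fps) = inverse ((1 - fps_X) ^ Suc k) * inverse (1 - fps_X)"
    by (simp add: fps_inverse_mult mult.commute)
  also have "\<dots> = Abs_fps (\<lambda>n. of_nat ((k + n) choose n)) * Abs_fps (\<lambda>n. 1)"
    using Suc.IH by (simp add: fps_inverse_one_minus_fps_X)
  also have "\<dots> = Abs_fps (\<lambda>n. of_nat ((Suc k + n) choose n))"
  proof (rule fps_ext)
    fix n
    have "(Abs_fps (\<lambda>n. of_nat ((k + n) choose n)) * Abs_fps (\<lambda>n. 1 :: rat)) $ n = (\<Sum>i=0..n. of_nat ((k + i) choose i))"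
      by (simp add: fps_mult_nth)
    also have "\<dots> = of_nat (\<Sum>i\<le>n. (k + i) choose i)" by (simp add: atLeast0AtMost)
    also have "\<dots> = of_nat ((Suc k + n) choose n)" by (simp add: sum_choose_lower)
    finally show "(Abs_fps (\<lambda>n. of_nat ((k + n) choose n)) * Abs_fps (\<lambda>n. 1 :: rat)) $ n = Abs_fps (\<lambda>n. of_nat ((Suc k + n) choose n)) $ n"
      by simp
  qed
  finally show ?case .
qed

lemma smult_sum_r: "smult c (\<Sum>i\<in>I. f i) = (\<Sum>i\<in>I. smult c (f i))"
  by (induction I rule: infinite_finite_induct) (auto simp: smult_add_right)

lemma smult_cancel_r: "(x :: rat) \<noteq> 0 \<Longrightarrow> smult x (smult (1 / x) p) = p"
  by simp

lemma ofnat_mult: "(of_nat k :: rat poly) * p = smult (of_nat k) p"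
  by (simp add: of_nat_poly)

lemma cancel_fact: assumes h: "(of_nat (fact n) :: rat poly) * X = Y" shows "X = smult (1 / of_nat (fact n)) Y"
proof -
  have "Y = smult (of_nat (fact n)) X" using h by (subst (asm) ofnat_mult) simp
  then show ?thesis by simp
qed

theorem mainTheorem9:
  fixes m :: nat
  assumes "m \<ge> 1"
  shows "((fps_deriv ^^ (m+1)) (Wgf m)
           = fps_const [: of_nat (fact (2*m+1)) / (of_nat (fact m))^2 :] * (Wgf m)^2)
      \<and> (\<forall>i \<le> m. ((fps_deriv ^^ i) (Wgf m)) $ 0 = smult (of_nat (fact (m+i))) [:0, 1:])
      \<and> (Abs_fps (\<lambda>n. poly (Wgf m $ n) 1)
           = fps_const (of_nat (fact m)) * inverse ((1 - fps_X) ^ (m+1)))"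
proof (intro conjI allI impI)
  note W = Wgf_nth[OF assms]
  show "(fps_deriv ^^ (m+1)) (Wgf m) = fps_const [: of_nat (fact (2*m+1)) / (of_nat (fact m))^2 :] * (Wgf m)^2"
  proof (rule fps_ext)
    fix n
    define c :: rat where "c = of_nat (fact (2*m+1)) / (of_nat (fact m))^2"
    define N where "N = n + Suc (2*m)"
    have L0: "of_nat (fact n) * ((fps_deriv ^^ (m+1)) (Wgf m) $ n) = of_nat (fact (n + (m+1))) * Wgf m $ (n + (m+1))"
      by (rule deriv_pow_nth)
    have idx: "n + (m+1) + m = N" by (simp add: N_def)
    have "of_nat (fact (n + (m+1))) * Wgf m $ (n + (m+1)) = smult (of_nat (fact (n + (m+1)))) (smult (1 / of_nat (fact (n + (m+1)))) (S m (n + (m+1) + m)))"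
      by (subst ofnat_mult) (simp only: W)
    also have "\<dots> = S m (n + (m+1) + m)" by (rule smult_cancel_r) (metis fact_nonzero of_nat_eq_0_iff)
    finally have "of_nat (fact (n + (m+1))) * Wgf m $ (n + (m+1)) = S m N" using idx by simp
    then have L: "(fps_deriv ^^ (m+1)) (Wgf m) $ n = smult (1 / of_nat (fact n)) (S m N)"
      using L0 by (intro cancel_fact) simp
    have SI: "of_nat (fact m) ^ 2 * S m N = of_nat (fact (Suc (2*m))) * (\<Sum>i\<le>n. of_nat (n choose i) * S m (i + m) * S m (n - i + m))"
      unfolding N_def by (rule S_identity)
    have SI2: "smult (of_nat (fact m ^ 2)) (S m N) = smult (of_nat (fact (Suc (2*m)))) (\<Sum>i\<le>n. smult (of_nat (n choose i)) (S m (i + m) * S m (n - i + m)))"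
      using SI by (simp only: of_nat_power[symmetric] ofnat_mult mult_smult_left)
    have fm: "(of_nat (fact m ^ 2) :: rat) \<noteq> 0" by simp
    have SN: "S m N = smult c (\<Sum>i\<le>n. smult (of_nat (n choose i)) (S m (i + m) * S m (n - i + m)))"
    proof -
      have "S m N = smult (1 / of_nat (fact m ^ 2)) (smult (of_nat (fact m ^ 2)) (S m N))"
        using fm by simp
      also have "\<dots> = smult c (\<Sum>i\<le>n. smult (of_nat (n choose i)) (S m (i + m) * S m (n - i + m)))"
        unfolding SI2 by (simp add: c_def)
      finally show ?thesis .
    qed
    have R: "(fps_const [: c :] * (Wgf m)^2) $ n
       = smult c (\<Sum>i\<le>n. smult (1 / (of_nat (fact i) * of_nat (fact (n - i)))) (S m (i + m) * S m (n - i + m)))"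
    proof -
      have "(fps_const [: c :] * (Wgf m)^2) $ n = [:c:] * ((Wgf m * Wgf m) $ n)"
        by (simp only: fps_mult_left_const_nth power2_eq_square)
      also have "(Wgf m * Wgf m) $ n = (\<Sum>i=0..n. Wgf m $ i * Wgf m $ (n - i))"
        by (rule fps_mult_nth)
      also have "[:c:] * (\<Sum>i=0..n. Wgf m $ i * Wgf m $ (n - i)) = smult c (\<Sum>i\<le>n. Wgf m $ i * Wgf m $ (n - i))"
        by (simp add: atLeast0AtMost)
      also have "(\<Sum>i\<le>n. Wgf m $ i * Wgf m $ (n - i))
          = (\<Sum>i\<le>n. smult (1 / (of_nat (fact i) * of_nat (fact (n - i)))) (S m (i + m) * S m (n - i + m)))"
        by (rule sum.cong[OF refl]) (simp add: W mult.commute)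
      finally show ?thesis .
    qed
    have bin: "smult (1 / of_nat (fact n)) (smult (of_nat (n choose i)) p) = smult (1 / (of_nat (fact i) * of_nat (fact (n - i)))) p"
      if "i \<le> n" for i and p :: "rat poly"
      using that by (simp add: binomial_fact)
    have "smult (1 / of_nat (fact n)) (S m N)
       = smult c (\<Sum>i\<le>n. smult (1 / of_nat (fact n)) (smult (of_nat (n choose i)) (S m (i + m) * S m (n - i + m))))"
      unfolding SN by (simp add: smult_sum_r mult.commute)
    also have "\<dots> = smult c (\<Sum>i\<le>n. smult (1 / (of_nat (fact i) * of_nat (fact (n - i)))) (S m (i + m) * S m (n - i + m)))"
      by (rule arg_cong[where f="smult c"], rule sum.cong[OF refl], rule bin) simp
    finally show "(fps_deriv ^^ (m+1)) (Wgf m) $ n = (fps_const [: of_nat (fact (2*m+1)) / (of_nat (fact m))^2 :] * (Wgf m)^2) $ n"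
      using L R by (simp add: c_def)
  qed
next
  fix i assume i: "i \<le> m"
  note W = Wgf_nth[OF assms]
  have "of_nat (fact 0) * ((fps_deriv ^^ i) (Wgf m) $ 0) = of_nat (fact (0 + i)) * Wgf m $ (0 + i)"
    by (rule deriv_pow_nth)
  then have X: "(fps_deriv ^^ i) (Wgf m) $ 0 = of_nat (fact i) * Wgf m $ i" by simp
  have "(of_nat (fact i) :: rat poly) * Wgf m $ i = smult (of_nat (fact i)) (smult (1 / of_nat (fact i)) (S m (i + m)))"
    by (subst ofnat_mult) (simp only: W)
  also have "\<dots> = S m (i + m)" by (rule smult_cancel_r) (metis fact_nonzero of_nat_eq_0_iff)
  finally have "(fps_deriv ^^ i) (Wgf m) $ 0 = S m (i + m)" using X by simp
  also have "\<dots> = smult (of_nat (fact (m+i))) [:0, 1:]"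
    using S_small[of "i + m" m] i by (simp add: add.commute)
  finally show "(fps_deriv ^^ i) (Wgf m) $ 0 = smult (of_nat (fact (m+i))) [:0, 1:]" .
next
  note W = Wgf_nth[OF assms]
  show "Abs_fps (\<lambda>n. poly (Wgf m $ n) 1) = fps_const (of_nat (fact m)) * inverse ((1 - fps_X) ^ (m+1))"
  proof (rule fps_ext)
    fix n
    have l: "poly (Wgf m $ n) 1 = of_nat (fact (n + m)) / of_nat (fact n)"
      by (simp add: W S_def poly_G1)
    have r: "(fps_const (of_nat (fact m)) * inverse ((1 - fps_X) ^ (m+1)) :: rat fps) $ n
        = of_nat (fact m) * of_nat ((m + n) choose n)"
      using inv_pow[of m] by simp
    have "(of_nat ((m + n) choose n) :: rat) = of_nat (fact (m + n)) / (of_nat (fact n) * of_nat (fact m))"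
      by (simp add: binomial_fact)
    then show "Abs_fps (\<lambda>n. poly (Wgf m $ n) 1) $ n = (fps_const (of_nat (fact m)) * inverse ((1 - fps_X) ^ (m+1))) $ n"
      using l r by (simp add: add.commute)
  qed
qed

end
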